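(* Let $\mathbb{K}$ be a field and let $A\in\mathbb{K}[x]^{m\times n}$ have rank $r\ge 1$. Let $K\in\mathbb{K}[x]^{n\times(n-r)}$ be a right kernel basis of $A$, and let $R\in\mathbb{K}[x]^{r\times n}$ be a left kernel basis of $K$. Then $A$ and $R$ have the same pivot support: $\rho(A)=\rho(R)$.
   Context: A right kernel basis of $A\in\mathbb{K}[x]^{m\times n}$ of rank $r$ is a matrix in $\mathbb{K}[x]^{n\times(n-r)}$ whose columns form a basis of the $\mathbb{K}[x]$-module $\{v\in\mathbb{K}[x]^{n\times 1}: Av=0\}$; a left kernel basis of $K\in\mathbb{K}[x]^{n\times k}$ is a matrix whose rows form a basis of $\{p\in\mathbb{K}[x]^{1\times n}: pK=0\}$ (when $k=0$ this is all of $\mathbb{K}[x]^{1\times n}$). For a row vector $p=[p_1,\dots,p_n]$, $\deg(p)=\max_j\deg(p_j)$; the pivot index of a nonzero $p$ is the largest $j$ with $\deg(p_j)=\deg(p)$, and $p_j$ is its pivot entry. A matrix $P\in\mathbb{K}[x]^{k\times n}$ is in Popov form if it has no zero row, the pivot indices of its rows are strictly increasing, its pivot entries are monic, and in each column containing a pivot entry all other entries have degree strictly less than that pivot entry. The Popov form of a matrix $M$ of rank $r$ is the unique matrix in $\mathbb{K}[x]^{r\times n}$ in Popov form whose rows generate the same $\mathbb{K}[x]$-module as the rows of $M$. The pivot support $\rho(M)\in\mathbb{Z}_{>0}^r$ of $M$ is the tuple of pivot indices of the rows of its Popov form (the empty tuple if $r=0$). *)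

theory Defs
  imports "Jordan_Normal_Form.DL_Rank" "HOL-Computational_Algebra.Polynomial"
    "HOL-Computational_Algebra.Fraction_Field"
begin

definition poly_mat_rank :: "'a::field poly mat \<Rightarrow> nat" where
  "poly_mat_rank A = vec_space.rank (dim_row A) (map_mat to_fract A)"

definition cols_basis_of :: "'a::field poly mat \<Rightarrow> 'a poly vec set \<Rightarrow> bool" where
  "cols_basis_of K M \<longleftrightarrow>
     (\<forall>c \<in> carrier_vec (dim_col K). K *\<^sub>v c \<in> M) \<and>
     (\<forall>v \<in> M. \<exists>!c. c \<in> carrier_vec (dim_col K) \<and> v = K *\<^sub>v c)"

definition rows_basis_of :: "'a::field poly mat \<Rightarrow> 'a poly vec set \<Rightarrow> bool" where
  "rows_basis_of R M \<longleftrightarrow>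
     (\<forall>c \<in> carrier_vec (dim_row R). transpose_mat R *\<^sub>v c \<in> M) \<and>
     (\<forall>p \<in> M. \<exists>!c. c \<in> carrier_vec (dim_row R) \<and> p = transpose_mat R *\<^sub>v c)"

definition right_kernel :: "'a::field poly mat \<Rightarrow> 'a poly vec set" where
  "right_kernel A = {v \<in> carrier_vec (dim_col A). A *\<^sub>v v = 0\<^sub>v (dim_row A)}"

definition left_kernel :: "'a::field poly mat \<Rightarrow> 'a poly vec set" where
  "left_kernel K = {p \<in> carrier_vec (dim_row K). transpose_mat K *\<^sub>v p = 0\<^sub>v (dim_col K)}"

definition is_right_kernel_basis :: "'a::field poly mat \<Rightarrow> 'a poly mat \<Rightarrow> bool" where
  "is_right_kernel_basis A K \<longleftrightarrow>
     K \<in> carrier_mat (dim_col A) (dim_col A - poly_mat_rank A) \<and>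
     cols_basis_of K (right_kernel A)"

definition is_left_kernel_basis :: "'a::field poly mat \<Rightarrow> 'a poly mat \<Rightarrow> bool" where
  "is_left_kernel_basis K R \<longleftrightarrow>
     dim_col R = dim_row K \<and> rows_basis_of R (left_kernel K)"

(* degree of a row vector; only meaningful for nonzero vectors
   (zero entries have degree -infinity and are ignored) *)
definition vec_deg :: "'a::zero poly vec \<Rightarrow> nat" where
  "vec_deg p = Max {degree (p $ j) | j. j < dim_vec p \<and> p $ j \<noteq> 0}"

(* pivot index (0-based): largest j with deg p_j = deg p *)
definition pivot_index :: "'a::zero poly vec \<Rightarrow> nat" where
  "pivot_index p = Max {j. j < dim_vec p \<and> p $ j \<noteq> 0 \<and> degree (p $ j) = vec_deg p}"

definition is_popov :: "'a::field poly mat \<Rightarrow> bool" where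
  "is_popov P \<longleftrightarrow>
     (\<forall>i < dim_row P. row P i \<noteq> 0\<^sub>v (dim_col P)) \<and>
     (\<forall>i i'. i < i' \<and> i' < dim_row P \<longrightarrow> pivot_index (row P i) < pivot_index (row P i')) \<and>
     (\<forall>i < dim_row P. lead_coeff (P $$ (i, pivot_index (row P i))) = 1) \<and>
     (\<forall>i < dim_row P. \<forall>i' < dim_row P. i' \<noteq> i \<longrightarrow>
        P $$ (i', pivot_index (row P i)) = 0 \<or>
        degree (P $$ (i', pivot_index (row P i))) < degree (P $$ (i, pivot_index (row P i))))"

definition row_module :: "'a::field poly mat \<Rightarrow> 'a poly vec set" where
  "row_module M = {transpose_mat M *\<^sub>v c | c. c \<in> carrier_vec (dim_row M)}"

definition is_popov_form_of :: "'a::field poly mat \<Rightarrow> 'a poly mat \<Rightarrow> bool" where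
  "is_popov_form_of M P \<longleftrightarrow>
     P \<in> carrier_mat (poly_mat_rank M) (dim_col M) \<and> is_popov P \<and>
     row_module P = row_module M"

definition popov_form :: "'a::field poly mat \<Rightarrow> 'a poly mat" where
  "popov_form M = (THE P. is_popov_form_of M P)"

(* pivot support, with 0-based column indices *)
definition pivot_support :: "'a::field poly mat \<Rightarrow> nat list" where
  "pivot_support M = map (\<lambda>i. pivot_index (row (popov_form M) i)) [0..<dim_row (popov_form M)]"

end

theory Submission
  imports Defs
begin


definition small :: "nat \<Rightarrow> 'a::zero poly \<Rightarrow> bool" where
  "small E p \<longleftrightarrow> p = 0 \<or> degree p < E"

lemma small_0[simp]: "small E 0" by (simp add: small_def)

lemma small_diff: "small E a \<Longrightarrow> small E b \<Longrightarrow> small E (a - (b::'a::ab_group_add poly))"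
  unfolding small_def
  by (metis degree_diff_less diff_0_right diff_zero degree_minus minus_diff_eq)

lemma small_add: "small E a \<Longrightarrow> small E b \<Longrightarrow> small E (a + (b::'a::ab_group_add poly))"
  unfolding small_def
  by (metis add.left_neutral add.right_neutral degree_add_less)

lemma small_mono: "small E a \<Longrightarrow> E \<le> F \<Longrightarrow> small F a"
  unfolding small_def by auto

lemma small_mult_monom: "small E p \<Longrightarrow> small (e + E) (monom c e * (p::'a::field poly))"
  unfolding small_def
proof (elim disjE)
  assume "degree p < E"
  then show "monom c e * p = 0 \<or> degree (monom c e * p) < e + E"
    by (metis add_le_less_mono degree_monom_le degree_mult_le le_less_trans)
qed auto

lemma small_iff_le: "small (Suc E) p \<longleftrightarrow> degree p \<le> E"
  unfolding small_def by auto

lemma lead_diff: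
  assumes "(a::'a::ab_group_add poly) \<noteq> 0" "small (degree a) b"
  shows "a - b \<noteq> 0 \<and> degree (a - b) = degree a \<and> lead_coeff (a - b) = lead_coeff a"
proof (cases "b = 0")
  case True then show ?thesis using assms by auto
next
  case False
  then have d: "degree b < degree a" using assms small_def by auto
  then have d2: "degree (-b) < degree a" by simp
  have e: "a - b = a + (-b)" by simp
  have "degree (a - b) = degree a" unfolding e using degree_add_eq_left[OF d2] .
  moreover have "coeff (a - b) (degree a) = coeff a (degree a)"
    using d by (simp add: coeff_eq_0)
  ultimately show ?thesis using assms(1)
    by (metis d degree_0 leading_coeff_0_iff not_less0)
qed

lemma lead_cancel:
  assumes "degree (a::'a::ab_group_add poly) = degree b" "lead_coeff a = lead_coeff b"
  shows "small (degree a) (a - b)"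
proof -
  have "degree (a - b) \<le> degree a" using assms degree_diff_le by (metis order_refl)
  moreover have "coeff (a - b) (degree a) = 0" using assms by simp
  ultimately show ?thesis unfolding small_def
    by (metis le_neq_implies_less leading_coeff_0_iff)
qed

lemma lemX:
  assumes "small B (a::'a::ab_group_add poly)" "\<not> small B (a - b)"
  shows "b \<noteq> 0 \<and> degree (a - b) = degree b \<and> small (degree b) a"
proof -
  have ab: "a - b \<noteq> 0" "degree (a - b) \<ge> B" using assms(2) unfolding small_def by auto
  have sb: "small (degree b) a"
  proof (rule ccontr)
    assume "\<not> small (degree b) a"
    then have "a \<noteq> 0" "degree b \<le> degree a" unfolding small_def by auto
    then have "degree (a - b) \<le> degree a" by (simp add: degree_diff_le)
    moreover have "degree a < B" using assms(1) \<open>a \<noteq> 0\<close> small_def by auto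
    ultimately show False using ab by auto
  qed
  have b0: "b \<noteq> 0" using assms by auto
  have "degree (b - a) = degree b" using lead_diff[OF b0 sb] by simp
  moreover have "a - b = - (b - a)" by simp
  ultimately show ?thesis using b0 sb by (metis degree_minus)
qed

lemma small_sum: "finite S \<Longrightarrow> (\<And>s. s \<in> S \<Longrightarrow> small E (f s)) \<Longrightarrow> small E (sum f S :: 'a::ab_group_add poly)"
  by (induction S rule: finite_induct) (auto intro: small_add)

lemma degree_monom_mult:
  assumes "c \<noteq> 0" "(p::'a::field poly) \<noteq> 0"
  shows "degree (monom c e * p) = e + degree p \<and> lead_coeff (monom c e * p) = c * lead_coeff p"
  using assms by (simp add: degree_mult_eq degree_monom_eq coeff_monom_mult)



lemma vec_nonzero_ex:
  assumes "v \<in> carrier_vec n" "v \<noteq> 0\<^sub>v n"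
  shows "\<exists>j<n. v $ j \<noteq> 0"
  using assms by (metis carrier_vecD eq_vecI index_zero_vec(1) index_zero_vec(2))

lemma pivot_props:
  fixes v :: "'a::zero poly vec"
  assumes "v \<in> carrier_vec n" "v \<noteq> 0\<^sub>v n"
  shows "pivot_index v < n" "v $ pivot_index v \<noteq> 0"
    "degree (v $ pivot_index v) = vec_deg v"
    "\<And>i. i < n \<Longrightarrow> degree (v $ i) \<le> vec_deg v"
    "\<And>i. i < n \<Longrightarrow> pivot_index v < i \<Longrightarrow> small (vec_deg v) (v $ i)"
proof -
  have dv: "dim_vec v = n" using assms by auto
  obtain j0 where j0: "j0 < n" "v $ j0 \<noteq> 0" using vec_nonzero_ex[OF assms] by auto
  let ?D = "{degree (v $ j) | j. j < dim_vec v \<and> v $ j \<noteq> 0}"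
  have finD: "finite ?D" by simp
  have neD: "?D \<noteq> {}" using j0 dv by auto
  have Dle: "\<And>i. i < n \<Longrightarrow> v $ i \<noteq> 0 \<Longrightarrow> degree (v $ i) \<le> vec_deg v"
    unfolding vec_deg_def using finD dv by (intro Max_ge) auto
  have "vec_deg v \<in> ?D" unfolding vec_deg_def using finD neD by (rule Max_in)
  then obtain j1 where j1: "j1 < n" "v $ j1 \<noteq> 0" "degree (v $ j1) = vec_deg v" using dv by auto
  let ?P = "{j. j < dim_vec v \<and> v $ j \<noteq> 0 \<and> degree (v $ j) = vec_deg v}"
  have finP: "finite ?P" by simp
  have neP: "?P \<noteq> {}" using j1 dv by auto
  have "pivot_index v \<in> ?P" unfolding pivot_index_def using finP neP by (rule Max_in)
  then show p1: "pivot_index v < n" "v $ pivot_index v \<noteq> 0"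
    "degree (v $ pivot_index v) = vec_deg v" using dv by auto
  show Dle2: "\<And>i. i < n \<Longrightarrow> degree (v $ i) \<le> vec_deg v"
    using Dle by (metis degree_0 zero_le)
  show "\<And>i. i < n \<Longrightarrow> pivot_index v < i \<Longrightarrow> small (vec_deg v) (v $ i)"
  proof -
    fix i assume i: "i < n" "pivot_index v < i"
    show "small (vec_deg v) (v $ i)"
    proof (rule ccontr)
      assume "\<not> small (vec_deg v) (v $ i)"
      then have "v $ i \<noteq> 0" "degree (v $ i) = vec_deg v" using Dle2[OF i(1)] unfolding small_def by auto
      then have "i \<in> ?P" using i dv by auto
      then have "i \<le> pivot_index v" unfolding pivot_index_def by (rule Max_ge[OF finP])
      then show False using i by auto
    qed
  qed
qed

lemma pivot_char:
  fixes v :: "'a::zero poly vec"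
  assumes "v \<in> carrier_vec n" "j < n" "v $ j \<noteq> 0"
    "\<And>i. i < n \<Longrightarrow> degree (v $ i) \<le> degree (v $ j)"
    "\<And>i. i < n \<Longrightarrow> j < i \<Longrightarrow> small (degree (v $ j)) (v $ i)"
  shows "vec_deg v = degree (v $ j)" "pivot_index v = j"
proof -
  have dv: "dim_vec v = n" using assms by auto
  let ?D = "{degree (v $ j) | j. j < dim_vec v \<and> v $ j \<noteq> 0}"
  have "Max ?D = degree (v $ j)"
    by (rule Max_eqI) (use assms dv in auto)
  then show vd: "vec_deg v = degree (v $ j)" unfolding vec_deg_def .
  let ?P = "{j. j < dim_vec v \<and> v $ j \<noteq> 0 \<and> degree (v $ j) = vec_deg v}"
  have "Max ?P = j"
  proof (rule Max_eqI)
    show "finite ?P" by simp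
    show "j \<in> ?P" using assms dv vd by auto
    fix y assume "y \<in> ?P"
    then show "y \<le> j" using assms(5)[of y] dv vd unfolding small_def by (cases "j < y") auto
  qed
  then show "pivot_index v = j" unfolding pivot_index_def .
qed



definition submod :: "nat \<Rightarrow> 'a::field poly vec set \<Rightarrow> bool" where
  "submod n S \<longleftrightarrow> S \<subseteq> carrier_vec n \<and> 0\<^sub>v n \<in> S \<and> (\<forall>x\<in>S. \<forall>y\<in>S. x + y \<in> S) \<and>
     (\<forall>x\<in>S. \<forall>y\<in>S. x - y \<in> S) \<and> (\<forall>a. \<forall>x\<in>S. a \<cdot>\<^sub>v x \<in> S)"

lemma mult_mat_vec_smult_comm:
  assumes "(A::'a::comm_ring mat) \<in> carrier_mat nr nc" "v \<in> carrier_vec nc"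
  shows "A *\<^sub>v (k \<cdot>\<^sub>v v) = k \<cdot>\<^sub>v (A *\<^sub>v v)"
  using assms by (intro eq_vecI) (auto simp: scalar_prod_smult_right)

lemma transpose_mult_vec_index:
  fixes P :: "'a::comm_ring mat"
  assumes "c \<in> carrier_vec (dim_row P)" "l < dim_col P"
  shows "(transpose_mat P *\<^sub>v c) $ l = (\<Sum>i<dim_row P. c $ i * P $$ (i, l))"
  using assms by (auto simp: scalar_prod_def mult.commute intro!: sum.cong)

lemma row_module_carrier: "row_module M \<subseteq> carrier_vec (dim_col M)"
  unfolding row_module_def by (auto intro!: carrier_vecI)

lemma submod_row_module: "submod (dim_col M) (row_module (M::'a::field poly mat))"
proof -
  have MT: "transpose_mat M \<in> carrier_mat (dim_col M) (dim_row M)" by auto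
  show ?thesis unfolding submod_def
  proof (intro conjI ballI allI)
    show "row_module M \<subseteq> carrier_vec (dim_col M)" by (rule row_module_carrier)
    show "0\<^sub>v (dim_col M) \<in> row_module M" unfolding row_module_def
      by (rule CollectI, rule exI[of _ "0\<^sub>v (dim_row M)"]) (auto intro!: eq_vecI)
    fix x y assume "x \<in> row_module M" "y \<in> row_module M"
    then obtain c d where c: "c \<in> carrier_vec (dim_row M)" "x = transpose_mat M *\<^sub>v c"
      and d: "d \<in> carrier_vec (dim_row M)" "y = transpose_mat M *\<^sub>v d"
      unfolding row_module_def by auto
    show "x + y \<in> row_module M" unfolding row_module_def
      by (rule CollectI, rule exI[of _ "c + d"]) (use c d MT mult_add_distrib_mat_vec[OF MT c(1) d(1)] in auto)
    show "x - y \<in> row_module M" unfolding row_module_def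
      by (rule CollectI, rule exI[of _ "c - d"]) (use c d MT mult_minus_distrib_mat_vec[OF MT c(1) d(1)] in auto)
  next
    fix a x assume "x \<in> row_module M"
    then obtain c where c: "c \<in> carrier_vec (dim_row M)" "x = transpose_mat M *\<^sub>v c"
      unfolding row_module_def by auto
    show "a \<cdot>\<^sub>v x \<in> row_module M" unfolding row_module_def
      by (rule CollectI, rule exI[of _ "a \<cdot>\<^sub>v c"]) (use c MT in \<open>auto simp: mult_mat_vec_smult_comm\<close>)
  qed
qed

lemma row_in_row_module:
  assumes "i < dim_row M"
  shows "row M i \<in> row_module M"
proof -
  have "row M i = transpose_mat M *\<^sub>v unit_vec (dim_row M) i"
    using assms by (intro eq_vecI) auto
  then show ?thesis unfolding row_module_def by auto
qed

lemma factor_rows: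
  fixes P M :: "'a::field poly mat"
  assumes "dim_col P = dim_col M" "\<And>i. i < dim_row P \<Longrightarrow> row P i \<in> row_module M"
  shows "\<exists>U \<in> carrier_mat (dim_row P) (dim_row M). P = U * M"
proof -
  have "\<forall>i. \<exists>c. i < dim_row P \<longrightarrow> c \<in> carrier_vec (dim_row M) \<and> row P i = transpose_mat M *\<^sub>v c"
    using assms(2) unfolding row_module_def by blast
  then obtain u where u: "\<And>i. i < dim_row P \<Longrightarrow> u i \<in> carrier_vec (dim_row M) \<and> row P i = transpose_mat M *\<^sub>v u i"
    by metis
  define U where "U = mat (dim_row P) (dim_row M) (\<lambda>(i,t). u i $ t)"
  have U: "U \<in> carrier_mat (dim_row P) (dim_row M)" unfolding U_def by auto
  have rU: "\<And>i. i < dim_row P \<Longrightarrow> row U i = u i"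
  proof -
    fix i assume i: "i < dim_row P"
    then have "dim_vec (u i) = dim_row M" using u by auto
    then show "row U i = u i" unfolding U_def using i by (intro eq_vecI) auto
  qed
  have "P = U * M"
  proof (rule eq_matI)
    fix i l assume il: "i < dim_row (U * M)" "l < dim_col (U * M)"
    then have i: "i < dim_row P" and l: "l < dim_col M" using U by auto
    have "P $$ (i, l) = row P i $ l" using i l assms(1) by auto
    also have "\<dots> = (transpose_mat M *\<^sub>v u i) $ l" using u[OF i] by simp
    also have "\<dots> = col M l \<bullet> u i" using l by auto
    also have "\<dots> = u i \<bullet> col M l" using u[OF i] by (intro comm_scalar_prod[of _ "dim_row M"]) auto
    also have "\<dots> = (U * M) $$ (i, l)" using i l U rU[OF i] by (simp add: index_mult_mat)
    finally show "P $$ (i, l) = (U * M) $$ (i, l)" .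
  next
    show "dim_row P = dim_row (U * M)" using U by simp
    show "dim_col P = dim_col (U * M)" using assms(1) by simp
  qed
  then show ?thesis using U by blast
qed

lemma row_module_mono:
  fixes P M :: "'a::field poly mat"
  assumes "dim_col P = dim_col M" "\<And>i. i < dim_row P \<Longrightarrow> row P i \<in> row_module M"
  shows "row_module P \<subseteq> row_module M"
proof
  obtain U where U: "U \<in> carrier_mat (dim_row P) (dim_row M)" "P = U * M"
    using factor_rows[OF assms] by auto
  fix x assume "x \<in> row_module P"
  then obtain c where c: "c \<in> carrier_vec (dim_row P)" "x = transpose_mat P *\<^sub>v c"
    unfolding row_module_def by auto
  have M: "M \<in> carrier_mat (dim_row M) (dim_col M)" by auto
  have "transpose_mat P = transpose_mat M * transpose_mat U"
    using U(2) transpose_mult[OF U(1) M] by simp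
  then have "x = transpose_mat M *\<^sub>v (transpose_mat U *\<^sub>v c)"
    using c U(1) by (simp add: assoc_mult_mat_vec[of _ "dim_col M" "dim_row M" _ "dim_row P"])
  moreover have "transpose_mat U *\<^sub>v c \<in> carrier_vec (dim_row M)" using U(1) by (intro carrier_vecI) simp
  ultimately show "x \<in> row_module M" unfolding row_module_def by auto
qed



definition Jset :: "nat \<Rightarrow> 'a::field poly vec set \<Rightarrow> nat set" where
  "Jset n S = {pivot_index p | p. p \<in> S \<and> p \<noteq> 0\<^sub>v n}"

definition dmin :: "nat \<Rightarrow> 'a::field poly vec set \<Rightarrow> nat \<Rightarrow> nat" where
  "dmin n S j = (LEAST D. \<exists>p\<in>S. p \<noteq> 0\<^sub>v n \<and> pivot_index p = j \<and> vec_deg p = D)"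

definition cand :: "nat \<Rightarrow> 'a::field poly vec set \<Rightarrow> nat \<Rightarrow> 'a poly vec \<Rightarrow> bool" where
  "cand n S j q \<longleftrightarrow> q \<in> S \<and> q \<noteq> 0\<^sub>v n \<and> pivot_index q = j \<and> vec_deg q = dmin n S j \<and> lead_coeff (q $ j) = 1"

definition reduced :: "nat \<Rightarrow> 'a::field poly vec set \<Rightarrow> nat \<Rightarrow> 'a poly vec \<Rightarrow> bool" where
  "reduced n S j q \<longleftrightarrow> cand n S j q \<and> (\<forall>l\<in>Jset n S. l \<noteq> j \<longrightarrow> small (dmin n S l) (q $ l))"

lemma submodD:
  assumes "submod n S"
  shows "S \<subseteq> carrier_vec n" "0\<^sub>v n \<in> S" "\<And>x y. x \<in> S \<Longrightarrow> y \<in> S \<Longrightarrow> x + y \<in> S"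
    "\<And>x y. x \<in> S \<Longrightarrow> y \<in> S \<Longrightarrow> x - y \<in> S" "\<And>a x. x \<in> S \<Longrightarrow> a \<cdot>\<^sub>v x \<in> S"
  using assms unfolding submod_def by auto

lemma Jset_sub:
  assumes "submod n S" shows "Jset n S \<subseteq> {..<n}"
proof
  fix j assume "j \<in> Jset n S"
  then obtain p where p: "p \<in> S" "p \<noteq> 0\<^sub>v n" "j = pivot_index p" unfolding Jset_def by auto
  have "p \<in> carrier_vec n" using p submodD(1)[OF assms] by auto
  then show "j \<in> {..<n}" using pivot_props(1)[OF _ p(2)] p(3) by auto
qed

lemma Jset_finite: "submod n S \<Longrightarrow> finite (Jset n S)"
  using Jset_sub finite_subset by blast

lemma dmin_le:
  assumes "p \<in> S" "p \<noteq> 0\<^sub>v n"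
  shows "dmin n S (pivot_index p) \<le> vec_deg p"
  unfolding dmin_def by (rule Least_le) (use assms in auto)

lemma pivotJ: "p \<in> S \<Longrightarrow> p \<noteq> 0\<^sub>v n \<Longrightarrow> pivot_index p \<in> Jset n S"
  unfolding Jset_def by auto

lemma cand_props:
  assumes "submod n S" "cand n S j q"
  shows "q \<in> carrier_vec n" "j < n" "q $ j \<noteq> 0" "degree (q $ j) = dmin n S j"
    "\<And>i. i < n \<Longrightarrow> degree (q $ i) \<le> dmin n S j"
    "\<And>i. i < n \<Longrightarrow> j < i \<Longrightarrow> small (dmin n S j) (q $ i)" "j \<in> Jset n S" "q \<in> S"
    "lead_coeff (q $ j) = 1"
proof -
  have qS: "q \<in> S" "q \<noteq> 0\<^sub>v n" "pivot_index q = j" "vec_deg q = dmin n S j" "lead_coeff (q $ j) = 1"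
    using assms(2) unfolding cand_def by auto
  show qc: "q \<in> carrier_vec n" using qS submodD(1)[OF assms(1)] by auto
  note pp = pivot_props[OF qc qS(2), unfolded qS(3,4)]
  show "j < n" "q $ j \<noteq> 0" "degree (q $ j) = dmin n S j"
    "\<And>i. i < n \<Longrightarrow> degree (q $ i) \<le> dmin n S j"
    "\<And>i. i < n \<Longrightarrow> j < i \<Longrightarrow> small (dmin n S j) (q $ i)" using pp by auto
  show "j \<in> Jset n S" using pivotJ[OF qS(1,2)] qS(3) by simp
  show "q \<in> S" "lead_coeff (q $ j) = 1" using qS by auto
qed

lemma cand_ex:
  assumes "submod n S" "j \<in> Jset n S"
  shows "\<exists>q. cand n S j q"
proof -
  have "\<exists>D. \<exists>p\<in>S. p \<noteq> 0\<^sub>v n \<and> pivot_index p = j \<and> vec_deg p = D"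
    using assms(2) unfolding Jset_def by auto
  from LeastI_ex[OF this] obtain p where p: "p \<in> S" "p \<noteq> 0\<^sub>v n" "pivot_index p = j"
    "vec_deg p = dmin n S j" unfolding dmin_def by blast
  have pc: "p \<in> carrier_vec n" using p submodD(1)[OF assms(1)] by auto
  note pp = pivot_props[OF pc p(2), unfolded p(3,4)]
  define a where "a = inverse (lead_coeff (p $ j))"
  have a0: "a \<noteq> 0" unfolding a_def using pp(2) by simp
  define q where "q = [:a:] \<cdot>\<^sub>v p"
  have qc: "q \<in> carrier_vec n" unfolding q_def using pc by auto
  have qi: "\<And>i. i < n \<Longrightarrow> q $ i = Polynomial.smult a (p $ i)" unfolding q_def using pc by auto
  have qj: "q $ j \<noteq> 0" "degree (q $ j) = dmin n S j" using qi[OF pp(1)] pp a0 by auto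
  have pc2: "vec_deg q = degree (q $ j) \<and> pivot_index q = j"
    using pivot_char[OF qc pp(1) qj(1)] qi pp a0 qj by (auto simp: small_def)
  have "q \<in> S" unfolding q_def using submodD(5)[OF assms(1) p(1)] .
  moreover have "q \<noteq> 0\<^sub>v n" using qj(1) pp(1) by auto
  moreover have "lead_coeff (q $ j) = 1" using qi[OF pp(1)] a0 pp(2) by (simp add: a_def)
  ultimately show ?thesis unfolding cand_def using pc2 qj by auto
qed

lemma small_all_zero:
  assumes "submod n S" "r \<in> S" "\<And>l. l \<in> Jset n S \<Longrightarrow> small (dmin n S l) (r $ l)"
  shows "r = 0\<^sub>v n"
proof (rule ccontr)
  assume r0: "r \<noteq> 0\<^sub>v n"
  have rc: "r \<in> carrier_vec n" using assms submodD(1) by auto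
  note pp = pivot_props[OF rc r0]
  have "small (dmin n S (pivot_index r)) (r $ pivot_index r)" using assms(3) pivotJ[OF assms(2) r0] .
  moreover have "dmin n S (pivot_index r) \<le> vec_deg r" using dmin_le[OF assms(2) r0] .
  ultimately show False using pp(2,3) unfolding small_def by auto
qed

lemma reduced_unique:
  assumes S: "submod n S" and q: "reduced n S j q" and q': "reduced n S j q'"
  shows "q = q'"
proof -
  have cq: "cand n S j q" and cq': "cand n S j q'" using q q' unfolding reduced_def by auto
  note p = cand_props[OF S cq] and p' = cand_props[OF S cq']
  have "q - q' \<in> S" using submodD(4)[OF S p(8) p'(8)] .
  moreover have "\<And>l. l \<in> Jset n S \<Longrightarrow> small (dmin n S l) ((q - q') $ l)"
  proof -
    fix l assume l: "l \<in> Jset n S"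
    have ln: "l < n" using l Jset_sub[OF S] by auto
    have e: "(q - q') $ l = q $ l - q' $ l" using p(1) p'(1) ln by auto
    show "small (dmin n S l) ((q - q') $ l)"
    proof (cases "l = j")
      case True
      then show ?thesis unfolding e using lead_cancel[of "q $ j" "q' $ j"] p(4,9) p'(4,9) by simp
    next
      case False
      then show ?thesis unfolding e using q q' l unfolding reduced_def by (auto intro: small_diff)
    qed
  qed
  ultimately have "q - q' = 0\<^sub>v n" by (rule small_all_zero[OF S])
  then show ?thesis using p(1) p'(1) by (metis minus_cancel_vec minus_zero_vec right_zero_vec carrier_vecD eq_vecI index_minus_vec(1) index_zero_vec(1) right_minus_eq)
qed



lemma measure_lt:
  fixes D D' j j' n :: nat
  assumes "D' \<le> D" "D' = D \<Longrightarrow> j' < j" "j' < n"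
  shows "D' * n + j' < D * n + j"
proof (cases "D' = D")
  case True then show ?thesis using assms by auto
next
  case False
  then have "Suc D' \<le> D" using assms by auto
  then have "Suc D' * n \<le> D * n" by (rule mult_le_mono1)
  then show ?thesis using assms(3) by auto
qed

lemma vec_eq_diff_add:
  assumes "s \<in> carrier_vec n" "t \<in> carrier_vec n"
  shows "s = (s - t) + (t :: 'a::ab_group_add vec)"
  using assms by (intro eq_vecI) auto

lemma generation:
  assumes S: "submod n S" and T: "submod n T"
    and g: "\<And>j. j \<in> Jset n S \<Longrightarrow> cand n S j (g j) \<and> g j \<in> T"
  shows "S \<subseteq> T"
proof -
  have main: "\<And>s. s \<in> S \<Longrightarrow> vec_deg s * n + pivot_index s = N \<Longrightarrow> s \<in> T" for N
  proof (induction N rule: less_induct)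
    case (less N s)
    show ?case
    proof (cases "s = 0\<^sub>v n")
      case True then show ?thesis using submodD(2)[OF T] by simp
    next
      case False
      have sc: "s \<in> carrier_vec n" using less(2) submodD(1)[OF S] by auto
      note pp = pivot_props[OF sc False]
      define j where "j = pivot_index s"
      define D where "D = vec_deg s"
      have jJ: "j \<in> Jset n S" unfolding j_def using pivotJ[OF less(2) False] .
      have dl: "dmin n S j \<le> D" unfolding j_def D_def using dmin_le[OF less(2) False] .
      have cq: "cand n S j (g j)" and qT: "g j \<in> T" using g[OF jJ] by auto
      note qp = cand_props[OF S cq]
      define c where "c = lead_coeff (s $ j)"
      define e where "e = D - dmin n S j"
      have eD: "e + dmin n S j = D" unfolding e_def using dl by simp
      define t where "t = monom c e \<cdot>\<^sub>v g j"
      have tc: "t \<in> carrier_vec n" unfolding t_def using qp(1) by auto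
      have ti: "\<And>i. i < n \<Longrightarrow> t $ i = monom c e * g j $ i" unfolding t_def using qp(1) by auto
      have tT: "t \<in> T" unfolding t_def by (rule submodD(5)[OF T qT])
      have tS: "t \<in> S" unfolding t_def by (rule submodD(5)[OF S qp(8)])
      have t_le: "\<And>i. i < n \<Longrightarrow> degree (t $ i) \<le> D"
      proof -
        fix i assume i: "i < n"
        have "small (Suc (dmin n S j)) (g j $ i)" using qp(5)[OF i] small_iff_le by auto
        then have "small (e + Suc (dmin n S j)) (t $ i)" unfolding ti[OF i] by (rule small_mult_monom)
        then show "degree (t $ i) \<le> D" using eD small_iff_le by (metis add_Suc_right)
      qed
      have t_sm: "\<And>i. i < n \<Longrightarrow> j < i \<Longrightarrow> small D (t $ i)"
        using small_mult_monom[OF qp(6)] ti eD by metis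
      have c0: "c \<noteq> 0" unfolding c_def j_def using pp(2) by simp
      have t_j: "degree (t $ j) = D" "lead_coeff (t $ j) = c"
        using degree_monom_mult[OF c0 qp(3), of e] ti[OF qp(2)] eD qp(4,9) by auto
      define s' where "s' = s - t"
      have s'S: "s' \<in> S" unfolding s'_def by (rule submodD(4)[OF S less(2) tS])
      have s'c: "s' \<in> carrier_vec n" unfolding s'_def using sc tc by auto
      have s'i: "\<And>i. i < n \<Longrightarrow> s' $ i = s $ i - t $ i" unfolding s'_def using tc by auto
      have s'j: "small D (s' $ j)" unfolding s'i[OF qp(2)]
        using lead_cancel[of "s $ j" "t $ j"] pp(3) t_j unfolding j_def D_def c_def by simp
      have s'gt: "\<And>i. i < n \<Longrightarrow> j < i \<Longrightarrow> small D (s' $ i)"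
        unfolding s'i using pp(5) t_sm unfolding j_def D_def by (auto intro: small_diff)
      have s'le: "\<And>i. i < n \<Longrightarrow> degree (s' $ i) \<le> D"
        unfolding s'i using pp(4) t_le unfolding D_def by (auto intro: degree_diff_le)
      have s'T: "s' \<in> T"
      proof (cases "s' = 0\<^sub>v n")
        case True then show ?thesis using submodD(2)[OF T] by simp
      next
        case False
        note pp' = pivot_props[OF s'c False]
        have le: "vec_deg s' \<le> D" using pp'(1,3) s'le by metis
        have lt: "vec_deg s' = D \<Longrightarrow> pivot_index s' < j"
        proof (rule ccontr)
          assume a: "vec_deg s' = D" "\<not> pivot_index s' < j"
          then have "small D (s' $ pivot_index s')"
            using s'j s'gt pp'(1) by (cases "pivot_index s' = j") auto
          then show False using pp'(2,3) a(1) unfolding small_def by auto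
        qed
        have "vec_deg s' * n + pivot_index s' < N"
          using measure_lt[OF le lt pp'(1)] less(3) unfolding j_def D_def by simp
        then show ?thesis using less(1) s'S by blast
      qed
      have "s = s' + t" unfolding s'_def using vec_eq_diff_add[OF sc tc] .
      then show ?thesis using submodD(3)[OF T s'T tT] by simp
    qed
  qed
  show ?thesis using main by blast
qed



definition viol :: "nat \<Rightarrow> 'a::field poly vec set \<Rightarrow> nat \<Rightarrow> 'a poly vec \<Rightarrow> nat set" where
  "viol n S j q = {l \<in> Jset n S. l \<noteq> j \<and> \<not> small (dmin n S l) (q $ l)}"

definition vdeg :: "nat \<Rightarrow> 'a::field poly vec set \<Rightarrow> nat \<Rightarrow> 'a poly vec \<Rightarrow> nat" where
  "vdeg n S j q = Max ((\<lambda>l. degree (q $ l)) ` viol n S j q)"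

definition vmax :: "nat \<Rightarrow> 'a::field poly vec set \<Rightarrow> nat \<Rightarrow> 'a poly vec \<Rightarrow> nat" where
  "vmax n S j q = Max {l \<in> viol n S j q. degree (q $ l) = vdeg n S j q}"

definition mu :: "nat \<Rightarrow> 'a::field poly vec set \<Rightarrow> nat \<Rightarrow> 'a poly vec \<Rightarrow> nat" where
  "mu n S j q = (if viol n S j q = {} then 0 else Suc (vdeg n S j q * n + vmax n S j q))"

lemma viol_props:
  assumes S: "submod n S" and V: "viol n S j q \<noteq> {}"
  shows "finite (viol n S j q)"
    "\<And>l. l \<in> viol n S j q \<Longrightarrow> degree (q $ l) \<le> vdeg n S j q"
    "vmax n S j q \<in> viol n S j q" "degree (q $ vmax n S j q) = vdeg n S j q"
    "\<And>l. l \<in> viol n S j q \<Longrightarrow> degree (q $ l) = vdeg n S j q \<Longrightarrow> l \<le> vmax n S j q"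
    "vmax n S j q < n"
proof -
  show fin: "finite (viol n S j q)" using Jset_finite[OF S] unfolding viol_def by auto
  show "\<And>l. l \<in> viol n S j q \<Longrightarrow> degree (q $ l) \<le> vdeg n S j q"
    unfolding vdeg_def using fin by auto
  have "vdeg n S j q \<in> (\<lambda>l. degree (q $ l)) ` viol n S j q"
    unfolding vdeg_def using fin V by (intro Max_in) auto
  then have W: "{l \<in> viol n S j q. degree (q $ l) = vdeg n S j q} \<noteq> {}" by auto
  have finW: "finite {l \<in> viol n S j q. degree (q $ l) = vdeg n S j q}" using fin by auto
  have "vmax n S j q \<in> {l \<in> viol n S j q. degree (q $ l) = vdeg n S j q}"
    unfolding vmax_def using finW W by (rule Max_in)
  then show vm: "vmax n S j q \<in> viol n S j q" "degree (q $ vmax n S j q) = vdeg n S j q" by auto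
  show "\<And>l. l \<in> viol n S j q \<Longrightarrow> degree (q $ l) = vdeg n S j q \<Longrightarrow> l \<le> vmax n S j q"
    unfolding vmax_def using finW by (intro Max_ge) auto
  show "vmax n S j q < n" using vm(1) Jset_sub[OF S] unfolding viol_def by auto
qed

lemma step:
  assumes S: "submod n S" and cq: "cand n S j q" and V: "viol n S j q \<noteq> {}"
  shows "\<exists>q'. cand n S j q' \<and> mu n S j q' < mu n S j q"
proof -
  note vp = viol_props[OF S V]
  define \<delta> where "\<delta> = vdeg n S j q"
  define l where "l = vmax n S j q"
  note qp = cand_props[OF S cq]
  have lJ: "l \<in> Jset n S" "l \<noteq> j" "\<not> small (dmin n S l) (q $ l)"
    using vp(3) unfolding l_def viol_def by auto
  have ln: "l < n" using vp(6) unfolding l_def .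
  have ql0: "q $ l \<noteq> 0" using lJ(3) by auto
  have qld: "degree (q $ l) = \<delta>" using vp(4) unfolding l_def \<delta>_def .
  have dl: "dmin n S l \<le> \<delta>" using lJ(3) qld unfolding small_def by auto
  have \<delta>j: "\<delta> \<le> dmin n S j" using qp(5)[OF ln] qld by simp
  obtain p where cp: "cand n S l p" using cand_ex[OF S lJ(1)] by auto
  note pp = cand_props[OF S cp]
  define c where "c = lead_coeff (q $ l)"
  have c0: "c \<noteq> 0" unfolding c_def using ql0 by simp
  define e where "e = \<delta> - dmin n S l"
  have eD: "e + dmin n S l = \<delta>" unfolding e_def using dl by simp
  define t where "t = monom c e \<cdot>\<^sub>v p"
  have tc: "t \<in> carrier_vec n" unfolding t_def using pp(1) by auto
  have ti: "\<And>i. i < n \<Longrightarrow> t $ i = monom c e * p $ i" unfolding t_def using pp(1) by auto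
  have tS: "t \<in> S" unfolding t_def by (rule submodD(5)[OF S pp(8)])
  have t_le: "\<And>i. i < n \<Longrightarrow> degree (t $ i) \<le> \<delta>"
  proof -
    fix i assume i: "i < n"
    have "small (Suc (dmin n S l)) (p $ i)" using pp(5)[OF i] small_iff_le by auto
    then have "small (e + Suc (dmin n S l)) (t $ i)" unfolding ti[OF i] by (rule small_mult_monom)
    then show "degree (t $ i) \<le> \<delta>" using eD small_iff_le by (metis add_Suc_right)
  qed
  have t_sm: "\<And>i. i < n \<Longrightarrow> l < i \<Longrightarrow> small \<delta> (t $ i)"
    using small_mult_monom[OF pp(6)] ti eD by metis
  have t_l: "degree (t $ l) = \<delta>" "lead_coeff (t $ l) = c"
    using degree_monom_mult[OF c0 pp(3), of e] ti[OF ln] eD pp(4,9) by auto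
  have t_smj: "\<And>i. i < n \<Longrightarrow> j \<le> i \<Longrightarrow> small (dmin n S j) (t $ i)"
  proof -
    fix i assume i: "i < n" "j \<le> i"
    show "small (dmin n S j) (t $ i)"
    proof (cases "l < j")
      case True
      then show ?thesis using t_sm[OF i(1)] i(2) \<delta>j by (auto intro: small_mono)
    next
      case False
      then have "j < l" using lJ(2) by auto
      then have "small (dmin n S j) (q $ l)" using qp(6)[OF ln] by auto
      then have "\<delta> < dmin n S j" using ql0 qld unfolding small_def by auto
      then show ?thesis using t_le[OF i(1)] unfolding small_def by auto
    qed
  qed
  define q' where "q' = q - t"
  have q'S: "q' \<in> S" unfolding q'_def by (rule submodD(4)[OF S qp(8) tS])
  have q'c: "q' \<in> carrier_vec n" unfolding q'_def using qp(1) tc by auto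
  have q'i: "\<And>i. i < n \<Longrightarrow> q' $ i = q $ i - t $ i" unfolding q'_def using tc by auto
  have q'j: "q' $ j \<noteq> 0" "degree (q' $ j) = dmin n S j" "lead_coeff (q' $ j) = 1"
    using lead_diff[OF qp(3), of "t $ j"] t_smj[OF qp(2)] qp(4,9) q'i[OF qp(2)] by auto
  have q'le: "\<And>i. i < n \<Longrightarrow> degree (q' $ i) \<le> degree (q' $ j)"
    unfolding q'j(2) q'i using qp(5) t_le \<delta>j by (auto intro: degree_diff_le order.trans)
  have q'gt: "\<And>i. i < n \<Longrightarrow> j < i \<Longrightarrow> small (degree (q' $ j)) (q' $ i)"
    unfolding q'j(2) q'i using qp(6) t_smj by (auto intro: small_diff)
  note pc = pivot_char[OF q'c qp(2) q'j(1) q'le q'gt]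
  have q'0: "q' \<noteq> 0\<^sub>v n" using q'j(1) qp(2) by auto
  have cq': "cand n S j q'" unfolding cand_def using q'S q'0 pc q'j by auto
  have A: "\<And>l'. l' \<in> viol n S j q' \<Longrightarrow> degree (q' $ l') \<le> \<delta> \<and> (degree (q' $ l') = \<delta> \<longrightarrow> l' < l)"
  proof -
    fix l' assume l'V: "l' \<in> viol n S j q'"
    then have l'J: "l' \<in> Jset n S" "l' \<noteq> j" "\<not> small (dmin n S l') (q' $ l')"
      unfolding viol_def by auto
    have l'n: "l' < n" using l'J(1) Jset_sub[OF S] by auto
    have q'l'0: "q' $ l' \<noteq> 0" using l'J(3) by auto
    show "degree (q' $ l') \<le> \<delta> \<and> (degree (q' $ l') = \<delta> \<longrightarrow> l' < l)"
    proof (cases "l' \<in> viol n S j q")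
      case True
      have le1: "degree (q $ l') \<le> \<delta>" using vp(2)[OF True] unfolding \<delta>_def .
      have le: "degree (q' $ l') \<le> \<delta>" unfolding q'i[OF l'n]
        using le1 t_le[OF l'n] by (rule degree_diff_le)
      have "degree (q' $ l') = \<delta> \<Longrightarrow> l' < l"
      proof (rule ccontr)
        assume a: "degree (q' $ l') = \<delta>" "\<not> l' < l"
        show False
        proof (cases "l' = l")
          case True
          have "small \<delta> (q' $ l)" unfolding q'i[OF ln]
            using lead_cancel[of "q $ l" "t $ l"] qld t_l unfolding c_def by simp
          then show False using a True q'l'0 unfolding small_def by auto
        next
          case False
          then have ll': "l < l'" using a by auto
          have "degree (q $ l') \<noteq> \<delta>"
            using vp(5)[OF True] ll' unfolding \<delta>_def l_def by fastforce
          then have "small \<delta> (q $ l')" using le1 unfolding small_def by auto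
          then have "small \<delta> (q' $ l')" unfolding q'i[OF l'n] using t_sm[OF l'n ll'] by (rule small_diff)
          then show False using a q'l'0 unfolding small_def by auto
        qed
      qed
      then show ?thesis using le by auto
    next
      case False
      then have sq: "small (dmin n S l') (q $ l')" using l'J unfolding viol_def by auto
      note X = lemX[OF sq l'J(3)[unfolded q'i[OF l'n]]]
      have le: "degree (q' $ l') \<le> \<delta>" unfolding q'i[OF l'n] using X t_le[OF l'n] by simp
      have "degree (q' $ l') = \<delta> \<Longrightarrow> l' < l"
      proof (rule ccontr)
        assume a: "degree (q' $ l') = \<delta>" "\<not> l' < l"
        have "l' \<noteq> l" using False vp(3) unfolding l_def by auto
        then have "l < l'" using a by auto
        then have "small \<delta> (t $ l')" using t_sm[OF l'n] by auto
        then show False using X a q'i[OF l'n] unfolding small_def by auto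
      qed
      then show ?thesis using le by auto
    qed
  qed
  have "mu n S j q' < mu n S j q"
  proof (cases "viol n S j q' = {}")
    case True then show ?thesis unfolding mu_def using V by simp
  next
    case False
    note vp' = viol_props[OF S False]
    have A1: "degree (q' $ vmax n S j q') \<le> \<delta>" "degree (q' $ vmax n S j q') = \<delta> \<longrightarrow> vmax n S j q' < l"
      using A[OF vp'(3)] by auto
    have le: "vdeg n S j q' \<le> \<delta>" using A1(1) vp'(4) by simp
    have lt: "vdeg n S j q' = \<delta> \<Longrightarrow> vmax n S j q' < l" using A1(2) vp'(4) by simp
    have "vdeg n S j q' * n + vmax n S j q' < \<delta> * n + l" by (rule measure_lt[OF le lt vp'(6)])
    then show ?thesis unfolding mu_def using V False unfolding \<delta>_def l_def by simp
  qed
  then show ?thesis using cq' by blast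
qed

lemma reduced_ex:
  assumes S: "submod n S" and j: "j \<in> Jset n S"
  shows "\<exists>q. reduced n S j q"
proof -
  obtain q0 where "cand n S j q0" using cand_ex[OF S j] by auto
  then obtain q where q: "cand n S j q" and qmin: "\<And>y. cand n S j y \<Longrightarrow> mu n S j q \<le> mu n S j y"
    using ex_has_least_nat[of "cand n S j" q0 "mu n S j"] by blast
  have "viol n S j q = {}"
  proof (rule ccontr)
    assume "viol n S j q \<noteq> {}"
    then obtain q' where "cand n S j q'" "mu n S j q' < mu n S j q" using step[OF S q] by blast
    then show False using qmin by fastforce
  qed
  then show ?thesis using q unfolding reduced_def viol_def by blast
qed



lemma small_mult: "small B p \<Longrightarrow> small (degree a + B) (a * (p::'a::field poly))"
  unfolding small_def
proof (elim disjE)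
  assume "degree p < B"
  then show "a * p = 0 \<or> degree (a * p) < degree a + B"
    by (metis add_le_less_mono degree_mult_le le_less_trans order_refl)
qed auto

lemma lead_add:
  assumes "(a::'a::ab_group_add poly) \<noteq> 0" "small (degree a) b"
  shows "a + b \<noteq> 0 \<and> degree (a + b) = degree a"
proof -
  have "small (degree a) (-b)" using assms(2) unfolding small_def by auto
  from lead_diff[OF assms(1) this] show ?thesis by simp
qed

lemma popov_rows:
  assumes "is_popov P" "i < dim_row P"
  shows "row P i \<in> carrier_vec (dim_col P)" "row P i \<noteq> 0\<^sub>v (dim_col P)"
  using assms unfolding is_popov_def by auto

lemma popov_mono:
  assumes "is_popov P" "i < i'" "i' < dim_row P"
  shows "pivot_index (row P i) < pivot_index (row P i')"
  using assms unfolding is_popov_def by auto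

lemma popov_mono_le:
  assumes "is_popov P" "i \<le> i'" "i' < dim_row P"
  shows "pivot_index (row P i) \<le> pivot_index (row P i')"
  using popov_mono[OF assms(1) _ assms(3), of i] assms(2) by (cases "i = i'") auto

lemma predictable:
  fixes P :: "'a::field poly mat"
  assumes P: "is_popov P" and c: "c \<in> carrier_vec (dim_row P)" "c \<noteq> 0\<^sub>v (dim_row P)"
  defines "s \<equiv> transpose_mat P *\<^sub>v c"
  shows "\<exists>i0 < dim_row P. c $ i0 \<noteq> 0 \<and> s \<noteq> 0\<^sub>v (dim_col P) \<and>
     pivot_index s = pivot_index (row P i0) \<and> vec_deg s = degree (c $ i0) + vec_deg (row P i0)"
proof -
  define k where "k = dim_row P"
  define n where "n = dim_col P"
  define D where "D i = vec_deg (row P i)" for i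
  define piv where "piv i = pivot_index (row P i)" for i
  define f where "f i = degree (c $ i) + D i" for i
  define I where "I = {i. i < k \<and> c $ i \<noteq> 0}"
  have finI: "finite I" unfolding I_def by auto
  have neI: "I \<noteq> {}" using vec_nonzero_ex[OF c] unfolding I_def k_def by auto
  define E where "E = Max (f ` I)"
  have fE: "\<And>i. i \<in> I \<Longrightarrow> f i \<le> E" unfolding E_def using finI by auto
  have "E \<in> f ` I" unfolding E_def using finI neI by auto
  then have neW: "{i \<in> I. f i = E} \<noteq> {}" by auto
  define i0 where "i0 = Max {i \<in> I. f i = E}"
  have i0W: "i0 \<in> {i \<in> I. f i = E}" unfolding i0_def using finI neW by (intro Max_in) auto
  have i0max: "\<And>i. i \<in> I \<Longrightarrow> f i = E \<Longrightarrow> i \<le> i0" unfolding i0_def using finI by (intro Max_ge) auto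
  have i0k: "i0 < k" "c $ i0 \<noteq> 0" "f i0 = E" using i0W unfolding I_def by auto
  have rp: "\<And>i. i < k \<Longrightarrow> row P i \<in> carrier_vec n \<and> row P i \<noteq> 0\<^sub>v n"
    using popov_rows[OF P] unfolding k_def n_def by auto
  have pp1: "\<And>i. i < k \<Longrightarrow> piv i < n" "\<And>i. i < k \<Longrightarrow> P $$ (i, piv i) \<noteq> 0"
     "\<And>i. i < k \<Longrightarrow> degree (P $$ (i, piv i)) = D i"
     "\<And>i l. i < k \<Longrightarrow> l < n \<Longrightarrow> degree (P $$ (i, l)) \<le> D i"
     "\<And>i l. i < k \<Longrightarrow> l < n \<Longrightarrow> piv i < l \<Longrightarrow> small (D i) (P $$ (i, l))"
  proof -
    fix i assume i: "i < k"
    note pp = pivot_props[of "row P i" n, OF conjunct1[OF rp[OF i]] conjunct2[OF rp[OF i]]]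
    have e: "\<And>l. l < n \<Longrightarrow> row P i $ l = P $$ (i, l)" using i unfolding k_def n_def by auto
    show "piv i < n" using pp(1) unfolding piv_def .
    show "P $$ (i, piv i) \<noteq> 0" using pp(2) e[OF pp(1)] unfolding piv_def by simp
    show "degree (P $$ (i, piv i)) = D i" using pp(3) e[OF pp(1)] unfolding piv_def D_def by simp
    fix l assume l: "l < n"
    show "degree (P $$ (i, l)) \<le> D i" using pp(4)[OF l] e[OF l] unfolding D_def by simp
    show "piv i < l \<Longrightarrow> small (D i) (P $$ (i, l))" using pp(5)[OF l] e[OF l] unfolding D_def piv_def by simp
  qed
  define j0 where "j0 = piv i0"
  have j0n: "j0 < n" unfolding j0_def using pp1(1)[OF i0k(1)] .
  have si: "\<And>l. l < n \<Longrightarrow> s $ l = (\<Sum>i<k. c $ i * P $$ (i, l))"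
    unfolding s_def k_def n_def using c(1) by (intro transpose_mult_vec_index) auto
  have sc: "s \<in> carrier_vec n" unfolding s_def n_def by (intro carrier_vecI) simp
  have term_le: "\<And>i l. i < k \<Longrightarrow> l < n \<Longrightarrow> small (Suc E) (c $ i * P $$ (i, l))"
  proof -
    fix i l assume i: "i < k" and l: "l < n"
    show "small (Suc E) (c $ i * P $$ (i, l))"
    proof (cases "c $ i = 0")
      case True then show ?thesis by simp
    next
      case False
      then have "f i \<le> E" using fE i unfolding I_def by auto
      moreover have "small (Suc (D i)) (P $$ (i, l))" using pp1(4)[OF i l] small_iff_le by auto
      ultimately show ?thesis using small_mult[of "Suc (D i)" "P $$ (i, l)" "c $ i"] unfolding f_def
        by (auto intro: small_mono)
    qed
  qed
  have term_sm: "\<And>i l. i < k \<Longrightarrow> l < n \<Longrightarrow> i \<noteq> i0 \<Longrightarrow> j0 \<le> l \<Longrightarrow> small E (c $ i * P $$ (i, l))"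
  proof -
    fix i l assume i: "i < k" and l: "l < n" and ii0: "i \<noteq> i0" and jl: "j0 \<le> l"
    show "small E (c $ i * P $$ (i, l))"
    proof (cases "c $ i = 0")
      case True then show ?thesis by simp
    next
      case False
      then have iI: "i \<in> I" using i unfolding I_def by auto
      show ?thesis
      proof (cases "f i = E")
        case True
        then have "i < i0" using i0max[OF iI] ii0 by fastforce
        then have "piv i < j0" unfolding j0_def piv_def using popov_mono[OF P] i0k(1) unfolding k_def by auto
        then have "small (D i) (P $$ (i, l))" using pp1(5)[OF i l] jl by auto
        then show ?thesis using small_mult[of "D i" "P $$ (i, l)" "c $ i"] True unfolding f_def by simp
      next
        case False
        then have "f i < E" using fE[OF iI] by auto
        moreover have "small (Suc (D i)) (P $$ (i, l))" using pp1(4)[OF i l] small_iff_le by auto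
        ultimately show ?thesis using small_mult[of "Suc (D i)" "P $$ (i, l)" "c $ i"] unfolding f_def
          by (auto intro: small_mono)
      qed
    qed
  qed
  have split: "\<And>l. l < n \<Longrightarrow> s $ l = c $ i0 * P $$ (i0, l) + (\<Sum>i\<in>{..<k} - {i0}. c $ i * P $$ (i, l))"
    using si i0k(1) by (simp add: sum.remove[of "{..<k}" i0])
  have rest_sm: "\<And>l. l < n \<Longrightarrow> j0 \<le> l \<Longrightarrow> small E (\<Sum>i\<in>{..<k} - {i0}. c $ i * P $$ (i, l))"
    by (rule small_sum) (auto intro: term_sm)
  have t0: "c $ i0 * P $$ (i0, j0) \<noteq> 0" "degree (c $ i0 * P $$ (i0, j0)) = E"
    using i0k pp1(2,3)[OF i0k(1)] unfolding j0_def f_def by (auto simp: degree_mult_eq)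
  have sj0: "s $ j0 \<noteq> 0" "degree (s $ j0) = E"
    using lead_add[OF t0(1)] rest_sm[OF j0n] split[OF j0n] t0(2) by auto
  have sle: "\<And>l. l < n \<Longrightarrow> degree (s $ l) \<le> degree (s $ j0)"
  proof -
    fix l assume l: "l < n"
    have "small (Suc E) (s $ l)" unfolding si[OF l] by (rule small_sum) (auto intro: term_le l)
    then show "degree (s $ l) \<le> degree (s $ j0)" using sj0 small_iff_le by auto
  qed
  have sgt: "\<And>l. l < n \<Longrightarrow> j0 < l \<Longrightarrow> small (degree (s $ j0)) (s $ l)"
  proof -
    fix l assume l: "l < n" "j0 < l"
    have "small E (c $ i0 * P $$ (i0, l))"
      using small_mult[OF pp1(5)[OF i0k(1) l(1)], of "c $ i0"] l(2) i0k(3) unfolding j0_def f_def by simp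
    then have "small E (s $ l)" unfolding split[OF l(1)] using rest_sm[OF l(1)] l(2)
      by (auto intro: small_add)
    then show "small (degree (s $ j0)) (s $ l)" using sj0 by simp
  qed
  note pc = pivot_char[OF sc j0n sj0(1) sle sgt]
  have s0: "s \<noteq> 0\<^sub>v n" using sj0(1) j0n by auto
  show ?thesis
    using i0k pc s0 sj0(2) i0k(3) unfolding k_def n_def j0_def piv_def f_def D_def by auto
qed



definition qrow :: "nat \<Rightarrow> 'a::field poly vec set \<Rightarrow> nat \<Rightarrow> 'a poly vec" where
  "qrow n S j = (SOME q. reduced n S j q)"

definition jl :: "nat \<Rightarrow> 'a::field poly vec set \<Rightarrow> nat list" where
  "jl n S = sorted_list_of_set (Jset n S)"

definition popmat :: "nat \<Rightarrow> 'a::field poly vec set \<Rightarrow> 'a poly mat" where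
  "popmat n S = mat_of_rows n (map (qrow n S) (jl n S))"

lemma qrow_red: "submod n S \<Longrightarrow> j \<in> Jset n S \<Longrightarrow> reduced n S j (qrow n S j)"
  unfolding qrow_def using reduced_ex by (metis someI_ex)

lemma sorted_list_unique':
  assumes "finite (A::nat set)" "sorted_wrt (<) l" "set l = A" "length l = card A"
  shows "sorted_list_of_set A = l"
  using sorted_list_of_set_unique[of A l] assms by auto

lemma jl_props:
  assumes S: "submod n S"
  shows "set (jl n S) = Jset n S" "length (jl n S) = card (Jset n S)" "sorted_wrt (<) (jl n S)"
    "\<And>i i'. i < i' \<Longrightarrow> i' < length (jl n S) \<Longrightarrow> jl n S ! i < jl n S ! i'"
    "\<And>i. i < length (jl n S) \<Longrightarrow> jl n S ! i \<in> Jset n S"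
proof -
  have fin: "finite (Jset n S)" using Jset_finite[OF S] .
  show s: "set (jl n S) = Jset n S" unfolding jl_def using fin by simp
  show "length (jl n S) = card (Jset n S)" unfolding jl_def using fin by simp
  show so: "sorted_wrt (<) (jl n S)" unfolding jl_def by (rule strict_sorted_list_of_set)
  show "\<And>i i'. i < i' \<Longrightarrow> i' < length (jl n S) \<Longrightarrow> jl n S ! i < jl n S ! i'"
    using so by (simp add: sorted_wrt_iff_nth_less)
  show "\<And>i. i < length (jl n S) \<Longrightarrow> jl n S ! i \<in> Jset n S" using s nth_mem by blast
qed

lemma popmat_props:
  assumes S: "submod n S"
  defines "P \<equiv> popmat n S" and "k \<equiv> card (Jset n S)"
  shows "P \<in> carrier_mat k n"
    "\<And>i. i < k \<Longrightarrow> row P i = qrow n S (jl n S ! i)"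
    "\<And>i. i < k \<Longrightarrow> pivot_index (row P i) = jl n S ! i"
    "is_popov P"
    "\<And>i. i < k \<Longrightarrow> row P i \<in> S"
proof -
  note jp = jl_props[OF S]
  have red: "\<And>i. i < k \<Longrightarrow> reduced n S (jl n S ! i) (qrow n S (jl n S ! i))"
    using qrow_red[OF S] jp(5) jp(2) unfolding k_def by auto
  have cnd: "\<And>i. i < k \<Longrightarrow> cand n S (jl n S ! i) (qrow n S (jl n S ! i))"
    using red unfolding reduced_def by auto
  note cp = cand_props[OF S cnd]
  show Pc: "P \<in> carrier_mat k n" unfolding P_def popmat_def k_def using jp(2) by (metis length_map mat_of_rows_carrier(1))
  show rw: "\<And>i. i < k \<Longrightarrow> row P i = qrow n S (jl n S ! i)"
    unfolding P_def popmat_def using cp(1) jp(2) unfolding k_def by (subst mat_of_rows_row) auto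
  show pv: "\<And>i. i < k \<Longrightarrow> pivot_index (row P i) = jl n S ! i"
    using rw cnd unfolding cand_def by auto
  show "\<And>i. i < k \<Longrightarrow> row P i \<in> S" using rw cp(8) by auto
  have ent: "\<And>i l. i < k \<Longrightarrow> l < n \<Longrightarrow> P $$ (i, l) = qrow n S (jl n S ! i) $ l"
    using rw Pc by (metis carrier_matD(1,2) index_row(1))
  show "is_popov P" unfolding is_popov_def
  proof (intro conjI)
    show "\<forall>i<dim_row P. row P i \<noteq> 0\<^sub>v (dim_col P)"
    proof (intro allI impI)
      fix i assume i: "i < dim_row P"
      then have ik: "i < k" using Pc by auto
      show "row P i \<noteq> 0\<^sub>v (dim_col P)" using rw[OF ik] cnd[OF ik] Pc unfolding cand_def by auto
    qed
    show "\<forall>i<dim_row P. lead_coeff (P $$ (i, pivot_index (row P i))) = 1"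
    proof (intro allI impI)
      fix i assume i: "i < dim_row P"
      then have ik: "i < k" using Pc by auto
      show "lead_coeff (P $$ (i, pivot_index (row P i))) = 1"
        using ent[OF ik cp(2)[OF ik]] pv[OF ik] cp(9)[OF ik] by simp
    qed
    show "\<forall>i<dim_row P. \<forall>i'<dim_row P. i' \<noteq> i \<longrightarrow> P $$ (i', pivot_index (row P i)) = 0 \<or>
        degree (P $$ (i', pivot_index (row P i))) < degree (P $$ (i, pivot_index (row P i)))"
    proof (intro allI impI)
      fix i i' assume i: "i < dim_row P" and i': "i' < dim_row P" "i' \<noteq> i"
      then have ik: "i < k" using Pc by auto
      then have i'k: "i' < k" using Pc i' by auto
      have ne: "jl n S ! i' \<noteq> jl n S ! i"
        using i'(2) jp(4) ik i'k jp(2) unfolding k_def by (metis nat_neq_iff)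
      have "small (dmin n S (jl n S ! i)) (qrow n S (jl n S ! i') $ (jl n S ! i))"
        using red[OF i'k] jp(5)[of i] ik ne jp(2) unfolding reduced_def k_def by auto
      then show "P $$ (i', pivot_index (row P i)) = 0 \<or>
        degree (P $$ (i', pivot_index (row P i))) < degree (P $$ (i, pivot_index (row P i)))"
        unfolding pv[OF ik] ent[OF i'k cp(2)[OF ik]] ent[OF ik cp(2)[OF ik]] cp(4)[OF ik] small_def .
    qed
    show "\<forall>i i'. i < i' \<and> i' < dim_row P \<longrightarrow> pivot_index (row P i) < pivot_index (row P i')"
    proof (intro allI impI)
      fix i i' assume "i < i' \<and> i' < dim_row P"
      then show "pivot_index (row P i) < pivot_index (row P i')"
        using pv jp(4) Pc jp(2) unfolding k_def by auto
    qed
  qed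
qed



lemma popmat_module:
  fixes M :: "'a::field poly mat"
  defines "n \<equiv> dim_col M" and "S \<equiv> row_module M"
  shows "row_module (popmat n S) = S"
proof -
  have Ssub: "submod n S" unfolding n_def S_def by (rule submod_row_module)
  note pp = popmat_props[OF Ssub]
  note jp = jl_props[OF Ssub]
  define P where "P = popmat n S"
  have Pc: "P \<in> carrier_mat (card (Jset n S)) n" unfolding P_def using pp(1) .
  show ?thesis unfolding P_def[symmetric]
  proof
    show "row_module P \<subseteq> S" unfolding S_def
      by (rule row_module_mono) (use Pc pp(5) in \<open>auto simp: n_def S_def P_def\<close>)
    have Tsub: "submod n (row_module P)" using submod_row_module[of P] Pc by auto
    show "S \<subseteq> row_module P"
    proof (rule generation[OF Ssub Tsub, of "qrow n S"])
      fix j assume j: "j \<in> Jset n S"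
      then obtain i where i: "i < length (jl n S)" "jl n S ! i = j" using jp(1) by (metis in_set_conv_nth)
      have "row P i = qrow n S j" using pp(2) i jp(2) unfolding P_def by auto
      moreover have "row P i \<in> row_module P" using Pc i jp(2) by (intro row_in_row_module) auto
      moreover have "cand n S j (qrow n S j)" using qrow_red[OF Ssub j] unfolding reduced_def by auto
      ultimately show "cand n S j (qrow n S j) \<and> qrow n S j \<in> row_module P" by auto
    qed
  qed
qed

lemma popov_unique:
  fixes M P' :: "'a::field poly mat"
  defines "n \<equiv> dim_col M" and "S \<equiv> row_module M"
  assumes P': "is_popov P'" "dim_col P' = n" "row_module P' = S"
  shows "P' = popmat n S"
proof -
  have Ssub: "submod n S" unfolding n_def S_def by (rule submod_row_module)
  note pp = popmat_props[OF Ssub]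
  note jp = jl_props[OF Ssub]
  define k' where "k' = dim_row P'"
  define piv where "piv i = pivot_index (row P' i)" for i
  define D where "D i = vec_deg (row P' i)" for i
  have rS: "\<And>i. i < k' \<Longrightarrow> row P' i \<in> S" using row_in_row_module P'(3) unfolding k'_def by auto
  have r0: "\<And>i. i < k' \<Longrightarrow> row P' i \<noteq> 0\<^sub>v n" using popov_rows[OF P'(1)] P'(2) unfolding k'_def by auto
  have rc: "\<And>i. i < k' \<Longrightarrow> row P' i \<in> carrier_vec n" using popov_rows[OF P'(1)] P'(2) unfolding k'_def by auto
  have a: "\<And>i. i < k' \<Longrightarrow> piv i \<in> Jset n S \<and> dmin n S (piv i) \<le> D i"
    unfolding piv_def D_def using pivotJ rS r0 dmin_le by blast
  have inj: "\<And>i i'. i < k' \<Longrightarrow> i' < k' \<Longrightarrow> piv i = piv i' \<Longrightarrow> i = i'"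
    using popov_mono[OF P'(1)] unfolding piv_def k'_def by (metis nat_neq_iff)
  have b: "\<And>j. j \<in> Jset n S \<Longrightarrow> \<exists>i0 < k'. piv i0 = j \<and> D i0 = dmin n S j"
  proof -
    fix j assume j: "j \<in> Jset n S"
    have cq: "cand n S j (qrow n S j)" using qrow_red[OF Ssub j] unfolding reduced_def by auto
    have "qrow n S j \<in> row_module P'" using cq P'(3) unfolding cand_def by auto
    then obtain c where c: "c \<in> carrier_vec k'" "qrow n S j = transpose_mat P' *\<^sub>v c"
      unfolding row_module_def k'_def by auto
    have c0: "c \<noteq> 0\<^sub>v k'"
    proof
      assume "c = 0\<^sub>v k'"
      then have "qrow n S j = 0\<^sub>v n" using c(2) P'(2) unfolding k'_def by (auto intro!: eq_vecI)
      then show False using cq unfolding cand_def by auto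
    qed
    obtain i0 where i0: "i0 < k'" "pivot_index (qrow n S j) = piv i0"
       "vec_deg (qrow n S j) = degree (c $ i0) + D i0"
      using predictable[OF P'(1), of c] c c0 unfolding k'_def piv_def D_def by auto
    have "piv i0 = j" "vec_deg (qrow n S j) = dmin n S j" using i0(2) cq unfolding cand_def by auto
    moreover have "dmin n S (piv i0) \<le> D i0" using a[OF i0(1)] by auto
    ultimately have "D i0 = dmin n S j" using i0(3) by auto
    then show "\<exists>i0 < k'. piv i0 = j \<and> D i0 = dmin n S j" using i0(1) \<open>piv i0 = j\<close> by auto
  qed
  have ent: "\<And>i l. i < k' \<Longrightarrow> l < n \<Longrightarrow> row P' i $ l = P' $$ (i, l)" using P'(2) unfolding k'_def by auto
  have red: "\<And>i. i < k' \<Longrightarrow> reduced n S (piv i) (row P' i)"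
  proof -
    fix i assume i: "i < k'"
    obtain i0 where i0: "i0 < k'" "piv i0 = piv i" "D i0 = dmin n S (piv i)" using b a[OF i] by blast
    have "i0 = i" using inj[OF i0(1) i i0(2)] .
    then have Di: "D i = dmin n S (piv i)" using i0 by simp
    note pr = pivot_props[OF rc[OF i] r0[OF i]]
    have lc: "lead_coeff (row P' i $ piv i) = 1"
      using P'(1) i ent[OF i pr(1)] unfolding is_popov_def k'_def piv_def by auto
    have cnd: "cand n S (piv i) (row P' i)" unfolding cand_def
      using rS[OF i] r0[OF i] Di lc unfolding D_def piv_def by auto
    have "\<And>l. l \<in> Jset n S \<Longrightarrow> l \<noteq> piv i \<Longrightarrow> small (dmin n S l) (row P' i $ l)"
    proof -
      fix l assume l: "l \<in> Jset n S" "l \<noteq> piv i"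
      obtain i' where i': "i' < k'" "piv i' = l" "D i' = dmin n S l" using b[OF l(1)] by blast
      have ii': "i' \<noteq> i" using i' l(2) by auto
      note pr' = pivot_props[OF rc[OF i'(1)] r0[OF i'(1)]]
      have "P' $$ (i, piv i') = 0 \<or> degree (P' $$ (i, piv i')) < degree (P' $$ (i', piv i'))"
        using P'(1) i i'(1) ii' unfolding is_popov_def k'_def piv_def by auto
      moreover have "degree (P' $$ (i', piv i')) = D i'"
        using pr'(3) ent[OF i'(1) pr'(1)] unfolding D_def piv_def by simp
      moreover have "row P' i $ l = P' $$ (i, piv i')" using ent[OF i] pr'(1) i'(2) unfolding piv_def by auto
      ultimately show "small (dmin n S l) (row P' i $ l)" using i'(3) unfolding small_def by auto
    qed
    then show "reduced n S (piv i) (row P' i)" using cnd unfolding reduced_def by auto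
  qed
  have rq: "\<And>i. i < k' \<Longrightarrow> row P' i = qrow n S (piv i)"
    using red reduced_unique[OF Ssub] qrow_red[OF Ssub] a by blast
  have setp: "set (map piv [0..<k']) = Jset n S"
  proof
    show "set (map piv [0..<k']) \<subseteq> Jset n S" using a by auto
    show "Jset n S \<subseteq> set (map piv [0..<k'])" using b by force
  qed
  have sw: "sorted_wrt (<) (map piv [0..<k'])"
    unfolding sorted_wrt_iff_nth_less using popov_mono[OF P'(1)] unfolding piv_def k'_def by auto
  have dist: "distinct (map piv [0..<k'])" using sw strict_sorted_iff by blast
  have len: "length (map piv [0..<k']) = card (Jset n S)"
    using distinct_card[OF dist] setp by simp
  have mj: "map piv [0..<k'] = jl n S"
    unfolding jl_def by (rule sorted_list_unique'[symmetric]) (use Jset_finite[OF Ssub] sw setp len in auto)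
  have k'k: "k' = card (Jset n S)" using len by simp
  have pj: "\<And>i. i < k' \<Longrightarrow> piv i = jl n S ! i" using mj by (metis diff_zero length_upt nth_map_upt add_0)
  show ?thesis
  proof (rule eq_rowI)
    show "dim_row P' = dim_row (popmat n S)" using pp(1) k'k unfolding k'_def by auto
    show "dim_col P' = dim_col (popmat n S)" using pp(1) P'(2) by auto
    fix i assume "i < dim_row (popmat n S)"
    then have i: "i < k'" using pp(1) k'k by auto
    show "row P' i = row (popmat n S) i" using rq[OF i] pj[OF i] pp(2) i k'k by auto
  qed
qed



context vec_space
begin

lemma mat_vec_in_span:
  assumes B: "B \<in> carrier_mat n k" and v: "v \<in> carrier_vec k"
  shows "B *\<^sub>v v \<in> span (set (cols B))"
proof -
  have cB: "set (cols B) \<subseteq> carrier_vec n" using B cols_dim by blast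
  have ws: "\<forall>w\<in>set (cols B). dim_vec w = n" using cB by auto
  have "lincomb_list (\<lambda>i. v $ i) (cols B) = mat_of_cols n (cols B) *\<^sub>v vec (length (cols B)) (\<lambda>i. v $ i)"
    by (rule lincomb_list_as_mat_mult[OF ws])
  also have "mat_of_cols n (cols B) = B" using B mat_of_cols_cols[of B] by auto
  also have "vec (length (cols B)) (\<lambda>i. v $ i) = v" using B v by (intro eq_vecI) auto
  finally have e: "B *\<^sub>v v = lincomb_list (\<lambda>i. v $ i) (cols B)" by simp
  have "B *\<^sub>v v \<in> span_list (cols B)" unfolding e by (rule in_span_listI) auto
  then show ?thesis using span_list_as_span[OF cB] by simp
qed

lemma rank_le_span:
  assumes A: "A \<in> carrier_mat n nc" and B: "B \<in> carrier_mat n k"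
    and sub: "set (cols A) \<subseteq> span (set (cols B))"
  shows "rank A \<le> k"
proof -
  obtain S where S: "maximal S (\<lambda>T. T \<subseteq> set (cols A) \<and> lin_indpt T)"
    using maximal_exists[of "(\<lambda>T. T \<subseteq> set (cols A) \<and> lin_indpt T)" "card (set (cols A))" "{}"]
    by (meson List.finite_set card_mono empty_iff empty_subsetI finite_lin_indpt2 rev_finite_subset)
  have SA: "S \<subseteq> set (cols A)" "lin_indpt S" using S unfolding maximal_def by auto
  have finS: "finite S" using SA(1) finite_subset by blast
  have cB: "set (cols B) \<subseteq> carrier_vec n" using B cols_dim by blast
  have Ssp: "S \<subseteq> span (set (cols B))" using SA(1) sub by (rule subset_trans)
  obtain C :: "'a vec set" where C: "int (card C) \<le> int (card (set (cols B))) - int (card S)"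
    using replacement[OF finS List.finite_set[of "cols B"] cB SA(2) Ssp] by (elim exE conjE) blast
  then have "card S \<le> card (set (cols B))" by linarith
  also have "\<dots> \<le> length (cols B)" by (rule card_length)
  also have "\<dots> = k" using B by auto
  finally show ?thesis using rank_card_indpt[OF A S] by simp
qed

lemma mat_unit_col:
  assumes "(B :: 'a mat) \<in> carrier_mat n k" "t < k"
  shows "B *\<^sub>v unit_vec k t = col B t"
proof (rule eq_vecI)
  fix i assume "i < dim_vec (col B t)"
  then have i: "i < n" using assms by auto
  have "row B i \<in> carrier_vec k" using assms by auto
  have "row B i \<bullet> unit_vec k t = row B i $ t" by (rule scalar_prod_right_unit[OF assms(2)])
  then show "(B *\<^sub>v unit_vec k t) $ i = col B t $ i" using i assms by auto
qed (use assms in auto)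

lemma rank_ge_cols:
  assumes A: "A \<in> carrier_mat n nc" and B: "B \<in> carrier_mat n k"
    and colsB: "set (cols B) \<subseteq> set (cols A)"
    and ker: "\<And>v. v \<in> carrier_vec k \<Longrightarrow> B *\<^sub>v v = 0\<^sub>v n \<Longrightarrow> v = 0\<^sub>v k"
  shows "k \<le> rank A"
proof -
  have cB: "set (cols B) \<subseteq> carrier_vec n" using B cols_dim by blast
  have dist: "distinct (cols B)"
  proof (rule ccontr)
    assume "\<not> distinct (cols B)"
    then obtain t t' where tt: "t < k" "t' < k" "t \<noteq> t'" "col B t = col B t'"
      using B by (metis carrier_matD(2) cols_length cols_nth distinct_conv_nth)
    define v :: "'a vec" where "v = unit_vec k t - unit_vec k t'"
    have vc: "v \<in> carrier_vec k" unfolding v_def by auto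
    have "B *\<^sub>v v = B *\<^sub>v unit_vec k t - B *\<^sub>v unit_vec k t'"
      unfolding v_def using B by (auto simp: mult_minus_distrib_mat_vec)
    also have "\<dots> = 0\<^sub>v n" using mat_unit_col[OF B tt(1)] mat_unit_col[OF B tt(2)] tt(4) B
      by (auto intro!: eq_vecI)
    finally have "v = 0\<^sub>v k" using ker[OF vc] by simp
    moreover have "v $ t = 1" unfolding v_def using tt by auto
    ultimately show False using tt by auto
  qed
  have li: "lin_indpt (set (cols B))"
  proof
    assume ld: "lin_dep (set (cols B))"
    obtain A' f' v where f'_in: "f' \<in> A' \<rightarrow> UNIV"
      and lc_f': "lincomb f' A' = 0\<^sub>v n" and f'_v: "f' v \<noteq> 0"
      and v_A': "v \<in> A'" and A'_in_rows: "A' \<subseteq> set (cols B)"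
      using ld unfolding lin_dep_def by auto
    define f where "f \<equiv> \<lambda>x. if x \<notin> A' then 0 else f' x"
    have A'_in_carrier: "A' \<subseteq> carrier_vec n" using A'_in_rows cB by auto
    have lc_f: "lincomb f (set (cols B)) = 0\<^sub>v n"
    proof -
      have l1: "lincomb f (set (cols B) - A') = 0\<^sub>v n"
        by (rule lincomb_zero, auto simp add: f_def, insert cB, blast)
      have l2: "lincomb f A' = 0\<^sub>v n " using lc_f' unfolding f_def using A'_in_carrier by auto
      have "lincomb f (set (cols B)) = lincomb f (set (cols B) - A') + lincomb f A'"
        by (rule lincomb_vec_diff_add) (use cB A'_in_rows in auto)
      also have "... =  0\<^sub>v n" using l1 l2 by auto
      finally show ?thesis .
    qed
    let ?ws = "cols B"
    let ?c = "(\<lambda>i. f (?ws ! i))"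
    have ws: "\<forall>w\<in>set ?ws. dim_vec w = n" using cB by auto
    have "B *\<^sub>v vec (length ?ws) ?c = mat_of_cols n ?ws *\<^sub>v vec (length ?ws) ?c"
      using B mat_of_cols_cols[of B] by auto
    also have "\<dots> = lincomb_list ?c ?ws" by (rule lincomb_list_as_mat_mult[symmetric, OF ws])
    also have "\<dots> = lincomb f (set ?ws)"
      by (rule lincomb_as_lincomb_list_distinct[symmetric, OF cB dist])
    also have "\<dots> = 0\<^sub>v n" using lc_f .
    finally have "vec (length ?ws) ?c = 0\<^sub>v k" using ker[of "vec (length ?ws) ?c"] B by auto
    moreover obtain i where i: "i < length ?ws" "?ws ! i = v" using v_A' A'_in_rows
      by (metis in_set_conv_nth subsetD)
    ultimately have "f v = 0" using B by (metis index_vec index_zero_vec(1) cols_length carrier_matD(2))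
    then show False using f'_v v_A' unfolding f_def by auto
  qed
  have "card (set (cols B)) \<le> rank A" by (rule rank_ge_card_indpt[OF A colsB li])
  moreover have "card (set (cols B)) = k" using distinct_card[OF dist] B by auto
  ultimately show ?thesis by simp
qed

end



interpretation tfh: inj_comm_ring_hom "to_fract :: 'b::idom \<Rightarrow> 'b fract" by (unfold_locales, auto)

lemma clear_denoms:
  fixes v :: "'b::idom fract vec"
  assumes "v \<in> carrier_vec k"
  shows "\<exists>d w. d \<noteq> 0 \<and> w \<in> carrier_vec k \<and> map_vec to_fract w = to_fract d \<cdot>\<^sub>v v"
proof -
  have "\<forall>t. \<exists>a b. b \<noteq> 0 \<and> v $ t = Fract a b" by (metis Fract_cases)
  then obtain a b where ab: "\<And>t. b t \<noteq> 0 \<and> v $ t = Fract (a t) (b t)" by metis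
  define d where "d = (\<Prod>t<k. b t)"
  define w where "w = vec k (\<lambda>t. a t * (\<Prod>s\<in>{..<k} - {t}. b s))"
  have d0: "d \<noteq> 0" unfolding d_def using ab by auto
  have "map_vec to_fract w = to_fract d \<cdot>\<^sub>v v"
  proof (rule eq_vecI)
    fix t assume "t < dim_vec (to_fract d \<cdot>\<^sub>v v)"
    then have t: "t < k" using assms by auto
    have dd: "d = b t * (\<Prod>s\<in>{..<k} - {t}. b s)" unfolding d_def using t
      by (simp add: prod.remove)
    have "map_vec to_fract w $ t = Fract (a t * (\<Prod>s\<in>{..<k} - {t}. b s)) 1"
      unfolding w_def using t by (simp add: to_fract_def)
    also have "\<dots> = Fract (d * a t) (b t)" using ab[of t] unfolding dd
      by (simp add: eq_fract ac_simps)
    also have "\<dots> = (to_fract d \<cdot>\<^sub>v v) $ t" using t assms ab[of t] by (simp add: to_fract_def)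
    finally show "map_vec to_fract w $ t = (to_fract d \<cdot>\<^sub>v v) $ t" .
  qed (use assms in \<open>auto simp: w_def\<close>)
  moreover have "w \<in> carrier_vec k" unfolding w_def by auto
  ultimately show ?thesis using d0 by blast
qed

lemma col_reduced_inj:
  fixes PJ :: "'a::field poly mat"
  assumes PJ: "PJ \<in> carrier_mat k k"
    and diag: "\<And>t. t < k \<Longrightarrow> PJ $$ (t, t) \<noteq> 0 \<and> degree (PJ $$ (t, t)) = dd t"
    and off: "\<And>s t. s < k \<Longrightarrow> t < k \<Longrightarrow> s \<noteq> t \<Longrightarrow> small (dd t) (PJ $$ (s, t))"
    and w: "w \<in> carrier_vec k" "PJ *\<^sub>v w = 0\<^sub>v k"
  shows "w = 0\<^sub>v k"
proof (rule ccontr)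
  assume w0: "w \<noteq> 0\<^sub>v k"
  define f where "f t = degree (w $ t) + dd t" for t
  define I where "I = {t. t < k \<and> w $ t \<noteq> 0}"
  have finI: "finite I" unfolding I_def by auto
  have neI: "I \<noteq> {}" using vec_nonzero_ex[OF w(1) w0] unfolding I_def by auto
  define E where "E = Max (f ` I)"
  have fE: "\<And>t. t \<in> I \<Longrightarrow> f t \<le> E" unfolding E_def using finI by auto
  have "E \<in> f ` I" unfolding E_def using finI neI by auto
  then obtain t0 where t0: "t0 \<in> I" "f t0 = E" by auto
  have t0k: "t0 < k" "w $ t0 \<noteq> 0" using t0 unfolding I_def by auto
  have e: "(PJ *\<^sub>v w) $ t0 = (\<Sum>s<k. PJ $$ (t0, s) * w $ s)"
    using PJ w(1) t0k by (auto simp: scalar_prod_def lessThan_atLeast0 intro!: sum.cong)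
  also have "\<dots> = PJ $$ (t0, t0) * w $ t0 + (\<Sum>s\<in>{..<k} - {t0}. PJ $$ (t0, s) * w $ s)"
    using t0k by (simp add: sum.remove)
  finally have e2: "(PJ *\<^sub>v w) $ t0 = PJ $$ (t0, t0) * w $ t0 + (\<Sum>s\<in>{..<k} - {t0}. PJ $$ (t0, s) * w $ s)" .
  have a0: "PJ $$ (t0, t0) * w $ t0 \<noteq> 0" "degree (PJ $$ (t0, t0) * w $ t0) = E"
    using diag[OF t0k(1)] t0k t0(2) unfolding f_def by (auto simp: degree_mult_eq)
  have "small E (\<Sum>s\<in>{..<k} - {t0}. PJ $$ (t0, s) * w $ s)"
  proof (rule small_sum)
    fix s assume s: "s \<in> {..<k} - {t0}"
    show "small E (PJ $$ (t0, s) * w $ s)"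
    proof (cases "w $ s = 0")
      case True then show ?thesis by simp
    next
      case False
      then have "f s \<le> E" using fE s unfolding I_def by auto
      moreover have "small (degree (w $ s) + dd s) (w $ s * PJ $$ (t0, s))"
        using small_mult[OF off[of t0 s]] s t0k by auto
      ultimately show ?thesis unfolding f_def by (auto simp: mult.commute intro: small_mono)
    qed
  qed auto
  then have "(PJ *\<^sub>v w) $ t0 \<noteq> 0" unfolding e2 using lead_add[OF a0(1)] a0(2) by auto
  then show False using w(2) t0k by auto
qed



lemma col_map_mat': "j < dim_col A \<Longrightarrow> col (map_mat f A) j = map_vec f (col A j)"
  by (intro eq_vecI) auto

lemma rank_card:
  fixes M :: "'a::field poly mat"
  defines "n \<equiv> dim_col M" and "S \<equiv> row_module M" and "m \<equiv> dim_row M"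
  shows "poly_mat_rank M = card (Jset n S)"
proof -
  have Ssub: "submod n S" unfolding n_def S_def by (rule submod_row_module)
  note pp = popmat_props[OF Ssub]
  note jp = jl_props[OF Ssub]
  define P where "P = popmat n S"
  define k where "k = card (Jset n S)"
  define js where "js = jl n S"
  have PM: "row_module P = S" unfolding P_def S_def n_def by (rule popmat_module)
  have Pc: "P \<in> carrier_mat k n" using pp(1) unfolding P_def k_def .
  have Mc: "M \<in> carrier_mat m n" unfolding m_def n_def by auto
  interpret vs: vec_space "TYPE('a poly fract)" m .
  define MF where "MF = map_mat to_fract M"
  have MFc: "MF \<in> carrier_mat m n" unfolding MF_def using Mc by auto
  have rk: "poly_mat_rank M = vs.rank MF" unfolding poly_mat_rank_def MF_def m_def ..
  have "\<And>i. i < dim_row M \<Longrightarrow> row M i \<in> row_module P"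
    using row_in_row_module[of _ M] PM unfolding S_def by auto
  then obtain C where C: "C \<in> carrier_mat m k" "M = C * P"
    using factor_rows[of M P] Pc unfolding m_def n_def by auto
  define CF where "CF = map_mat to_fract C"
  define PF where "PF = map_mat to_fract P"
  have CFc: "CF \<in> carrier_mat m k" unfolding CF_def using C by auto
  have PFc: "PF \<in> carrier_mat k n" unfolding PF_def using Pc by auto
  have MFe: "MF = CF * PF" unfolding MF_def CF_def PF_def C(2) using tfh.mat_hom_mult[OF C(1) Pc] .
  have sub: "set (cols MF) \<subseteq> vs.span (set (cols CF))"
  proof
    fix x assume "x \<in> set (cols MF)"
    then obtain j where j: "j < n" "x = col MF j" using MFc by (metis carrier_matD(2) cols_length cols_nth in_set_conv_nth)
    have "x = CF *\<^sub>v col PF j" unfolding j(2) MFe using col_mult2[OF CFc PFc j(1)] .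
    moreover have "col PF j \<in> carrier_vec k" using PFc j(1) by auto
    ultimately show "x \<in> vs.span (set (cols CF))" using vs.mat_vec_in_span[OF CFc] by auto
  qed
  have up: "vs.rank MF \<le> k" by (rule vs.rank_le_span[OF MFc CFc sub])
  have "\<And>i. i < dim_row P \<Longrightarrow> row P i \<in> row_module M"
    using pp(5) Pc unfolding P_def k_def S_def by auto
  then obtain U where U: "U \<in> carrier_mat k m" "P = U * M"
    using factor_rows[of P M] Pc unfolding m_def n_def by auto
  have jsn: "\<And>t. t < k \<Longrightarrow> js ! t < n" using jp(5) jp(2) Jset_sub[OF Ssub] unfolding js_def k_def by auto
  define MJ where "MJ = mat m k (\<lambda>(i,t). M $$ (i, js ! t))"
  define PJ where "PJ = mat k k (\<lambda>(s,t). P $$ (s, js ! t))"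
  have MJc: "MJ \<in> carrier_mat m k" unfolding MJ_def by auto
  have PJc: "PJ \<in> carrier_mat k k" unfolding PJ_def by auto
  have colMJ: "\<And>t. t < k \<Longrightarrow> col MJ t = col M (js ! t)"
    unfolding MJ_def using jsn Mc by (intro eq_vecI) auto
  have PJe: "PJ = U * MJ"
  proof (rule eq_matI)
    fix s t assume st: "s < dim_row (U * MJ)" "t < dim_col (U * MJ)"
    then have s: "s < k" and t: "t < k" using U MJc by auto
    have "(U * MJ) $$ (s, t) = row U s \<bullet> col MJ t" using s t U MJc by auto
    also have "\<dots> = row U s \<bullet> col M (js ! t)" using colMJ[OF t] by simp
    also have "\<dots> = (U * M) $$ (s, js ! t)" using s jsn[OF t] U Mc by auto
    also have "\<dots> = PJ $$ (s, t)" unfolding PJ_def U(2)[symmetric] using s t by auto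
    finally show "PJ $$ (s, t) = (U * MJ) $$ (s, t)" by simp
  qed (use U MJc PJc in auto)
  define MJF where "MJF = map_mat to_fract MJ"
  define UF where "UF = map_mat to_fract U"
  define PJF where "PJF = map_mat to_fract PJ"
  have MJFc: "MJF \<in> carrier_mat m k" unfolding MJF_def using MJc by auto
  have UFc: "UF \<in> carrier_mat k m" unfolding UF_def using U by auto
  have PJFe: "PJF = UF * MJF" unfolding PJF_def UF_def MJF_def PJe using tfh.mat_hom_mult[OF U(1) MJc] .
  have colsub: "set (cols MJF) \<subseteq> set (cols MF)"
  proof
    fix x assume "x \<in> set (cols MJF)"
    then obtain t where t: "t < k" "x = col MJF t" using MJFc by (metis carrier_matD(2) cols_length cols_nth in_set_conv_nth)
    have "x = col MF (js ! t)" unfolding t(2) MJF_def MF_def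
      using col_map_mat'[of t MJ to_fract] col_map_mat'[of "js ! t" M to_fract] colMJ[OF t(1)] t(1) jsn[OF t(1)] MJc Mc
      by auto
    then show "x \<in> set (cols MF)" using jsn[OF t(1)] MFc by (metis carrier_matD(2) cols_length cols_nth nth_mem)
  qed
  have diag: "\<And>t. t < k \<Longrightarrow> PJ $$ (t, t) \<noteq> 0 \<and> degree (PJ $$ (t, t)) = dmin n S (js ! t)"
  proof -
    fix t assume t: "t < k"
    have red: "reduced n S (js ! t) (qrow n S (js ! t))" using qrow_red[OF Ssub] jp(5) jp(2) t unfolding js_def k_def by auto
    then have cnd: "cand n S (js ! t) (qrow n S (js ! t))" unfolding reduced_def by auto
    have "PJ $$ (t, t) = row P t $ (js ! t)" unfolding PJ_def using t jsn[OF t] Pc by auto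
    also have "\<dots> = qrow n S (js ! t) $ (js ! t)" using pp(2)[OF t[unfolded k_def]] unfolding P_def js_def by simp
    finally show "PJ $$ (t, t) \<noteq> 0 \<and> degree (PJ $$ (t, t)) = dmin n S (js ! t)"
      using cand_props(3,4)[OF Ssub cnd] by simp
  qed
  have off: "\<And>s t. s < k \<Longrightarrow> t < k \<Longrightarrow> s \<noteq> t \<Longrightarrow> small (dmin n S (js ! t)) (PJ $$ (s, t))"
  proof -
    fix s t assume s: "s < k" and t: "t < k" and st: "s \<noteq> t"
    have red: "reduced n S (js ! s) (qrow n S (js ! s))" using qrow_red[OF Ssub] jp(5) jp(2) s unfolding js_def k_def by auto
    have ne: "js ! t \<noteq> js ! s" using jp(4) s t st jp(2) unfolding js_def k_def by (metis nat_neq_iff)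
    have "PJ $$ (s, t) = row P s $ (js ! t)" unfolding PJ_def using s t jsn[OF t] Pc by auto
    also have "\<dots> = qrow n S (js ! s) $ (js ! t)" using pp(2)[OF s[unfolded k_def]] unfolding P_def js_def by simp
    finally show "small (dmin n S (js ! t)) (PJ $$ (s, t))"
      using red jp(5)[of t] t ne jp(2) unfolding reduced_def js_def k_def by auto
  qed
  have ker: "\<And>v. v \<in> carrier_vec k \<Longrightarrow> MJF *\<^sub>v v = 0\<^sub>v m \<Longrightarrow> v = 0\<^sub>v k"
  proof -
    fix v :: "'a poly fract vec" assume v: "v \<in> carrier_vec k" "MJF *\<^sub>v v = 0\<^sub>v m"
    obtain d w where dw: "d \<noteq> 0" "w \<in> carrier_vec k" "map_vec to_fract w = to_fract d \<cdot>\<^sub>v v"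
      using clear_denoms[OF v(1)] by blast
    have "map_vec to_fract (PJ *\<^sub>v w) = PJF *\<^sub>v map_vec to_fract w"
      unfolding PJF_def by (rule tfh.mult_mat_vec_hom[OF PJc dw(2)])
    also have "\<dots> = to_fract d \<cdot>\<^sub>v (PJF *\<^sub>v v)" unfolding dw(3)
      using PJFe UFc MJFc v(1) by (intro mult_mat_vec[of _ k k]) auto
    also have "PJF *\<^sub>v v = UF *\<^sub>v (MJF *\<^sub>v v)" unfolding PJFe using UFc MJFc v(1) by simp
    also have "\<dots> = 0\<^sub>v k" unfolding v(2) using UFc by (intro eq_vecI) auto
    finally have "map_vec to_fract (PJ *\<^sub>v w) = 0\<^sub>v k" by auto
    then have "PJ *\<^sub>v w = 0\<^sub>v k" by simp
    then have w0: "w = 0\<^sub>v k" using col_reduced_inj[OF PJc diag off dw(2)] by blast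
    show "v = 0\<^sub>v k"
    proof (rule eq_vecI)
      fix t assume "t < dim_vec (0\<^sub>v k :: 'a poly fract vec)"
      then have t: "t < k" by simp
      have "(to_fract d \<cdot>\<^sub>v v) $ t = 0" using arg_cong[OF dw(3), of "\<lambda>x. x $ t"] w0 t by simp
      then show "v $ t = (0\<^sub>v k :: 'a poly fract vec) $ t" using t v(1) dw(1) by auto
    qed (use v in auto)
  qed
  have low: "k \<le> vs.rank MF" by (rule vs.rank_ge_cols[OF MFc MJFc colsub ker])
  show ?thesis using up low rk unfolding k_def by simp
qed



lemma pivot_support_eq:
  fixes M :: "'a::field poly mat"
  shows "pivot_support M = jl (dim_col M) (row_module M)"
proof -
  define n where "n = dim_col M"
  define S where "S = row_module M"
  have Ssub: "submod n S" unfolding n_def S_def by (rule submod_row_module)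
  note pp = popmat_props[OF Ssub]
  note jp = jl_props[OF Ssub]
  define P where "P = popmat n S"
  have PM: "row_module P = S" unfolding P_def S_def n_def by (rule popmat_module)
  have rk: "poly_mat_rank M = card (Jset n S)" unfolding n_def S_def by (rule rank_card)
  have PF: "is_popov_form_of M P" unfolding is_popov_form_of_def
    using pp(1,4) PM rk unfolding P_def n_def S_def by auto
  have uniq: "\<And>P'. is_popov_form_of M P' \<Longrightarrow> P' = P"
  proof -
    fix P' assume "is_popov_form_of M P'"
    then have "is_popov P'" "dim_col P' = n" "row_module P' = S"
      unfolding is_popov_form_of_def n_def S_def by auto
    then show "P' = P" unfolding P_def n_def S_def by (rule popov_unique)
  qed
  have pf: "popov_form M = P" unfolding popov_form_def using PF uniq by (rule the_equality)
  have "pivot_support M = map (\<lambda>i. pivot_index (row P i)) [0..<card (Jset n S)]"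
    unfolding pivot_support_def pf using pp(1) unfolding P_def by auto
  also have "\<dots> = map (\<lambda>i. jl n S ! i) [0..<length (jl n S)]"
    using pp(3) jp(2) unfolding P_def by auto
  also have "\<dots> = jl n S" by (rule map_nth)
  finally show ?thesis unfolding n_def S_def .
qed

lemma mat_unit_col_gen:
  assumes "(B :: 'a::comm_ring_1 mat) \<in> carrier_mat n k" "t < k"
  shows "B *\<^sub>v unit_vec k t = col B t"
proof (rule eq_vecI)
  fix i assume "i < dim_vec (col B t)"
  then have i: "i < n" using assms by auto
  have "row B i \<bullet> unit_vec k t = row B i $ t" by (rule scalar_prod_right_unit[OF assms(2)])
  then show "(B *\<^sub>v unit_vec k t) $ i = col B t $ i" using i assms by auto
qed (use assms in auto)

lemma rank_le_rows:
  fixes R :: "'a::field poly mat"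
  assumes "R \<in> carrier_mat r n"
  shows "poly_mat_rank R \<le> r"
proof -
  interpret vs: vec_space "TYPE('a poly fract)" r .
  define RF where "RF = map_mat to_fract R"
  have RFc: "RF \<in> carrier_mat r n" unfolding RF_def using assms by auto
  have Ic: "(1\<^sub>m r :: 'a poly fract mat) \<in> carrier_mat r r" by auto
  have sub: "set (cols RF) \<subseteq> vs.span (set (cols (1\<^sub>m r :: 'a poly fract mat)))"
  proof
    fix x assume x: "x \<in> set (cols RF)"
    then have xc: "x \<in> carrier_vec r" using RFc cols_dim by blast
    then have "x = 1\<^sub>m r *\<^sub>v x" by simp
    then show "x \<in> vs.span (set (cols (1\<^sub>m r :: 'a poly fract mat)))"
      using vs.mat_vec_in_span[OF Ic xc] by simp
  qed
  have "vs.rank RF \<le> r" by (rule vs.rank_le_span[OF RFc Ic sub])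
  moreover have "poly_mat_rank R = vs.rank RF" unfolding poly_mat_rank_def RF_def using assms by auto
  ultimately show ?thesis by simp
qed

theorem lemma4p2:
  fixes A K R :: "'a::field poly mat"
  assumes "A \<in> carrier_mat m n"
    and "poly_mat_rank A = r" and "r \<ge> 1"
    and "K \<in> carrier_mat n (n - r)" and "is_right_kernel_basis A K"
    and "R \<in> carrier_mat r n" and "is_left_kernel_basis K R"
  shows "pivot_support A = pivot_support R"
proof -
  have Ac: "A \<in> carrier_mat m n" and Kc: "K \<in> carrier_mat n (n - r)" and Rc: "R \<in> carrier_mat r n"
    using assms by auto
  have cb: "cols_basis_of K (right_kernel A)" using assms(5) unfolding is_right_kernel_basis_def by auto
  have rb: "rows_basis_of R (left_kernel K)" using assms(7) unfolding is_left_kernel_basis_def by auto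
  have AK: "A * K = 0\<^sub>m m (n - r)"
  proof (rule eq_matI)
    fix i j assume ij: "i < dim_row (0\<^sub>m m (n - r) :: 'a poly mat)" "j < dim_col (0\<^sub>m m (n - r) :: 'a poly mat)"
    then have i: "i < m" and j: "j < n - r" by auto
    have "K *\<^sub>v unit_vec (n - r) j \<in> right_kernel A"
      using cb Kc unfolding cols_basis_of_def by auto
    then have "A *\<^sub>v col K j = 0\<^sub>v m" unfolding right_kernel_def using mat_unit_col_gen[OF Kc j] Ac by auto
    moreover have "col (A * K) j = A *\<^sub>v col K j" using col_mult2[OF Ac Kc j] .
    ultimately have "col (A * K) j = 0\<^sub>v m" by simp
    then have "col (A * K) j $ i = 0" using i by simp
    then show "(A * K) $$ (i, j) = (0\<^sub>m m (n - r) :: 'a poly mat) $$ (i, j)" using i j Ac Kc by auto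
  qed (use Ac Kc in auto)
  have sub1: "row_module A \<subseteq> left_kernel K"
  proof
    fix x assume "x \<in> row_module A"
    then obtain c where c: "c \<in> carrier_vec (dim_row A)" "x = transpose_mat A *\<^sub>v c"
      unfolding row_module_def by auto
    have xc: "x \<in> carrier_vec (dim_row K)" using c(2) Ac Kc by (auto intro!: carrier_vecI)
    have "transpose_mat K *\<^sub>v x = (transpose_mat K * transpose_mat A) *\<^sub>v c"
      using c Ac Kc by (simp add: assoc_mult_mat_vec[of _ "n - r" n _ m])
    also have "transpose_mat K * transpose_mat A = transpose_mat (A * K)"
      using transpose_mult[OF Ac Kc] by simp
    also have "\<dots> = 0\<^sub>m (n - r) m" unfolding AK by simp
    also have "0\<^sub>m (n - r) m *\<^sub>v c = 0\<^sub>v (dim_col K)" using c Ac Kc by (intro eq_vecI) auto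
    finally show "x \<in> left_kernel K" unfolding left_kernel_def using xc by auto
  qed
  have sub2: "left_kernel K \<subseteq> row_module R"
    using rb unfolding rows_basis_of_def row_module_def by blast
  have nA: "dim_col A = n" and nR: "dim_col R = n" using Ac Rc by auto
  have JJ: "Jset n (row_module A) \<subseteq> Jset n (row_module R)"
    unfolding Jset_def using sub1 sub2 by blast
  have SR: "submod n (row_module R)" using submod_row_module[of R] nR by simp
  have finR: "finite (Jset n (row_module R))" by (rule Jset_finite[OF SR])
  have cA: "card (Jset n (row_module A)) = r" using rank_card[of A] assms(2) nA by simp
  have cR: "card (Jset n (row_module R)) \<le> r" using rank_card[of R] rank_le_rows[OF Rc] nR by simp
  have eqJ: "Jset n (row_module A) = Jset n (row_module R)"
    using card_seteq[OF finR JJ] cA cR by simp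
  show ?thesis using pivot_support_eq[of A] pivot_support_eq[of R] nA nR eqJ unfolding jl_def by simp
qed


end
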